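(* There exists a sequence of normalized triples $(\mathbb C,f_n,0)$, $n\in\mathbb N$, where each $f_n$ is an entire function of infinite order, that converges in the sense of Carathéodory to a normalized triple $(\mathbb C,f,0)$ in which $f$ is an entire function of order $1$.
   Context: A surface spread over the sphere is a pair $(S,f)$ with $S$ an open topological surface and $f:S\to\hat{\mathbb C}$ continuous, open and discrete. A pointed surface is $(S,f,w)$ with $w$ not a critical point of $f$. A triple is normalized if $S=D_R=\{|z|<R\}$ for some $R\in(0,+\infty]$ (so $D_\infty=\mathbb C$), $w=0$ and $f^{\#}(0)=1$ where $f^{\#}=f'/(1+|f|^2)$. $(S_1,f_1,w_1)\sim(S_2,f_2,w_2)$ if there is a homeomorphism $h$ with $h(w_1)=w_2$, $f_1=f_2\circ h$; $(S_1,f_1,w_1)\subset(S_2,f_2,w_2)$ if there is a continuous injective $\phi$ with $\phi(w_1)=w_2$, $f_1=f_2\circ\phi$; $T$ is maximal if $T\subset T_1$ implies $T\sim T_1$. Standing assumption on sequences: there exist $p\in\hat{\mathbb C}$, $r>0$ and domains $W_n\ni w_n$ with $f_n(w_n)=p$ and $f_n:W_n\to B(p,r)$ a homeomorphism. A kernel of $(S_n,f_n,w_n)$ is a pointed $(S,f,w)$ such that (1) there is a discrete $E\subset S$, $w\notin E$, such that for every compact $K\subset S\setminus E$ with $w\in K$ there is $N$ such that for all $n>N$ there is a continuous embedding $\phi_{K,n}:K\to S_n$ with $\phi_{K,n}(w)=w_n$ and $f_n\circ\phi_{K,n}=f$ on $K$; (2) the triple satisfying (1) is maximal in the sense of $\subset$.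 The sequence converges in the sense of Carathéodory to $(S,f,w)$ if $(S,f,w)$ is a kernel of every subsequence. *)

theory Defs
  imports "HOL-Analysis.Analysis"
begin

text \<open>The extended plane is modelled as \<open>complex option\<close> (\<open>None\<close> = \<infinity>). Its topology is the
pullback of the Euclidean topology of \<open>\<complex> \<times> \<real> = \<real>^3\<close> under the (injective) inverse
stereographic projection onto the unit sphere.\<close>

definition sphere_emb :: "complex option \<Rightarrow> complex \<times> real" where
  "sphere_emb p = (case p of None \<Rightarrow> (0, 1)
     | Some z \<Rightarrow> (2 * z / complex_of_real (1 + (cmod z)^2), ((cmod z)^2 - 1) / ((cmod z)^2 + 1)))"

definition riemann_sphere :: "complex option topology" where
  "riemann_sphere = pullback_topology UNIV sphere_emb euclidean"

definition sball :: "complex option \<Rightarrow> real \<Rightarrow> complex option set" where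
  "sball p r = {q. dist (sphere_emb p) (sphere_emb q) < r}"

definition open_surface :: "'a topology \<Rightarrow> bool" where
  "open_surface S \<longleftrightarrow> connected_space S \<and> Hausdorff_space S \<and> second_countable S \<and>
     \<not> compact_space S \<and>
     (\<forall>x\<in>topspace S. \<exists>U. openin S U \<and> x \<in> U \<and>
        (\<exists>V::complex set. open V \<and> subtopology S U homeomorphic_space top_of_set V))"

definition discrete_subset :: "'a topology \<Rightarrow> 'a set \<Rightarrow> bool" where
  "discrete_subset S E \<longleftrightarrow> E \<subseteq> topspace S \<and>
     (\<forall>x\<in>topspace S. \<exists>U. openin S U \<and> x \<in> U \<and> finite (U \<inter> E))"

definition spread_surface :: "'a topology \<Rightarrow> ('a \<Rightarrow> complex option) \<Rightarrow> bool" where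
  "spread_surface S f \<longleftrightarrow> open_surface S \<and> continuous_map S riemann_sphere f \<and>
     open_map S riemann_sphere f \<and>
     (\<forall>q. discrete_subset S {x \<in> topspace S. f x = q})"

text \<open>Critical point: a point at which \<open>f\<close> is not a local homeomorphism, i.e. not locally injective.\<close>
definition critical_point :: "'a topology \<Rightarrow> ('a \<Rightarrow> complex option) \<Rightarrow> 'a \<Rightarrow> bool" where
  "critical_point S f w \<longleftrightarrow> \<not> (\<exists>U. openin S U \<and> w \<in> U \<and> inj_on f U)"

definition pointed_surface :: "'a topology \<Rightarrow> ('a \<Rightarrow> complex option) \<Rightarrow> 'a \<Rightarrow> bool" where
  "pointed_surface S f w \<longleftrightarrow> spread_surface S f \<and> w \<in> topspace S \<and> \<not> critical_point S f w"

definition psub :: "'a topology \<Rightarrow> ('a \<Rightarrow> complex option) \<Rightarrow> 'a \<Rightarrow>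
                     'b topology \<Rightarrow> ('b \<Rightarrow> complex option) \<Rightarrow> 'b \<Rightarrow> bool" where
  "psub S1 f1 w1 S2 f2 w2 \<longleftrightarrow> (\<exists>\<phi>. continuous_map S1 S2 \<phi> \<and> inj_on \<phi> (topspace S1) \<and>
      \<phi> w1 = w2 \<and> (\<forall>x\<in>topspace S1. f1 x = f2 (\<phi> x)))"

definition pequiv :: "'a topology \<Rightarrow> ('a \<Rightarrow> complex option) \<Rightarrow> 'a \<Rightarrow>
                     'b topology \<Rightarrow> ('b \<Rightarrow> complex option) \<Rightarrow> 'b \<Rightarrow> bool" where
  "pequiv S1 f1 w1 S2 f2 w2 \<longleftrightarrow> (\<exists>h. homeomorphic_map S1 S2 h \<and>
      h w1 = w2 \<and> (\<forall>x\<in>topspace S1. f1 x = f2 (h x)))"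

definition standing_assumption :: "(nat \<Rightarrow> 'a topology) \<Rightarrow> (nat \<Rightarrow> 'a \<Rightarrow> complex option) \<Rightarrow>
     (nat \<Rightarrow> 'a) \<Rightarrow> bool" where
  "standing_assumption Sn fn wn \<longleftrightarrow> (\<exists>p r W. r > 0 \<and> (\<forall>n.
      openin (Sn n) (W n) \<and> connectedin (Sn n) (W n) \<and> wn n \<in> W n \<and> fn n (wn n) = p \<and>
      homeomorphic_map (subtopology (Sn n) (W n)) (subtopology riemann_sphere (sball p r)) (fn n)))"

definition kernel_cond :: "(nat \<Rightarrow> 'a topology) \<Rightarrow> (nat \<Rightarrow> 'a \<Rightarrow> complex option) \<Rightarrow> (nat \<Rightarrow> 'a) \<Rightarrow>
     'b topology \<Rightarrow> ('b \<Rightarrow> complex option) \<Rightarrow> 'b \<Rightarrow> bool" where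
  "kernel_cond Sn fn wn S f w \<longleftrightarrow> pointed_surface S f w \<and>
     (\<exists>E. discrete_subset S E \<and> w \<notin> E \<and>
        (\<forall>K. compactin S K \<and> K \<subseteq> topspace S - E \<and> w \<in> K \<longrightarrow>
           (\<exists>N. \<forall>n>N. \<exists>\<phi>. continuous_map (subtopology S K) (Sn n) \<phi> \<and> inj_on \<phi> K \<and>
                \<phi> (w) = wn n \<and> (\<forall>x\<in>K. fn n (\<phi> x) = f x))))"

text \<open>Every surface
is homeomorphic to one whose underlying point set is a subset of the type \<open>complex\<close>
(cardinality of the continuum), so competitors are taken with carrier in \<open>complex\<close>.\<close>
definition is_kernel :: "(nat \<Rightarrow> 'a topology) \<Rightarrow> (nat \<Rightarrow> 'a \<Rightarrow> complex option) \<Rightarrow> (nat \<Rightarrow> 'a) \<Rightarrow>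
     'b topology \<Rightarrow> ('b \<Rightarrow> complex option) \<Rightarrow> 'b \<Rightarrow> bool" where
  "is_kernel Sn fn wn S f w \<longleftrightarrow> kernel_cond Sn fn wn S f w \<and>
     (\<forall>(S1::complex topology) f1 w1. kernel_cond Sn fn wn S1 f1 w1 \<and> psub S f w S1 f1 w1
         \<longrightarrow> pequiv S f w S1 f1 w1)"

definition caratheodory_converges :: "(nat \<Rightarrow> 'a topology) \<Rightarrow> (nat \<Rightarrow> 'a \<Rightarrow> complex option) \<Rightarrow>
     (nat \<Rightarrow> 'a) \<Rightarrow> 'b topology \<Rightarrow> ('b \<Rightarrow> complex option) \<Rightarrow> 'b \<Rightarrow> bool" where
  "caratheodory_converges Sn fn wn S f w \<longleftrightarrow> standing_assumption Sn fn wn \<and>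
     (\<forall>r::nat \<Rightarrow> nat. strict_mono r \<longrightarrow> is_kernel (Sn \<circ> r) (fn \<circ> r) (wn \<circ> r) S f w)"

definition normalized_entire_triple :: "(complex \<Rightarrow> complex) \<Rightarrow> bool" where
  "normalized_entire_triple f \<longleftrightarrow> f holomorphic_on UNIV \<and>
     pointed_surface (euclidean :: complex topology) (Some \<circ> f) 0 \<and>
     deriv f 0 / complex_of_real (1 + (cmod (f 0))^2) = 1"

definition max_modulus :: "(complex \<Rightarrow> complex) \<Rightarrow> real \<Rightarrow> real" where
  "max_modulus f r = (SUP z\<in>sphere 0 r. cmod (f z))"

text \<open>Order \<open>\<rho> = limsup_{r\<rightarrow>\<infinity>} log log M(r) / log r\<close> (the \<open>max\<close> with \<open>e\<close> only matters for bounded,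
i.e. constant, \<open>f\<close>, giving order 0).\<close>
definition entire_order :: "(complex \<Rightarrow> complex) \<Rightarrow> ereal" where
  "entire_order f = Limsup at_top (\<lambda>r::real. ereal (ln (ln (max (exp 1) (max_modulus f r))) / ln r))"

end

theory Submission
  imports Defs "HOL-Complex_Analysis.Complex_Analysis" "HOL-Real_Asymp.Real_Asymp"
begin

definition gfun :: "complex \<Rightarrow> complex" where "gfun z = exp z - 1 - z"
definition psi :: "real \<Rightarrow> complex \<Rightarrow> complex" where "psi e z = z + of_real e * gfun z"
definition FF :: "real \<Rightarrow> complex \<Rightarrow> complex" where "FF e z = exp (psi e z) - 1"
definition good :: "real \<Rightarrow> real \<Rightarrow> bool" where
  "good e R \<longleftrightarrow> 0 \<le> e \<and> 1 \<le> R \<and> e * (exp R + 1 + R) \<le> 1/2"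

lemma norm_exp_R: "norm z \<le> R \<Longrightarrow> norm (exp z) \<le> exp R"
  by (meson exp_le_cancel_iff norm_exp order_trans)

lemma gderiv_bound: "norm z \<le> R \<Longrightarrow> norm (exp z - 1) \<le> exp R + 1"
  using norm_exp_R[of z R] norm_triangle_ineq4[of "exp z" 1] by simp

lemma g_bound: "norm z \<le> R \<Longrightarrow> norm (gfun z) \<le> exp R + 1 + R"
  unfolding gfun_def using gderiv_bound[of z R] norm_triangle_ineq4[of "exp z - 1" z] by simp

lemma g_lip:
  assumes "a \<in> cball 0 R" "b \<in> cball 0 R"
  shows "norm (gfun a - gfun b) \<le> (exp R + 1) * norm (a - b)"
proof (rule field_differentiable_bound[where f=gfun and f'="\<lambda>z. exp z - 1" and S="cball 0 R"])
  show "convex (cball (0::complex) R)" by simp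
  fix z assume "z \<in> cball (0::complex) R"
  show "(gfun has_field_derivative exp z - 1) (at z within cball 0 R)"
    unfolding gfun_def by (auto intro!: derivative_eq_intros)
  show "norm (exp z - 1) \<le> exp R + 1" using \<open>z \<in> cball 0 R\<close> by (intro gderiv_bound) simp
qed (use assms in auto)

lemma good_facts:
  assumes "good e R"
  shows "0 \<le> e" "1 \<le> R" "e * (exp R + 1) \<le> 1/2" "e * (exp R + 1 + R) \<le> 1/2"
proof -
  show "0 \<le> e" "1 \<le> R" "e * (exp R + 1 + R) \<le> 1/2" using assms by (auto simp: good_def)
  have "e * (exp R + 1) \<le> e * (exp R + 1 + R)" using assms by (intro mult_left_mono) (auto simp: good_def)
  then show "e * (exp R + 1) \<le> 1/2" using assms by (auto simp: good_def)
qed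

lemma psi_lower:
  assumes "good e R" "a \<in> cball 0 R" "b \<in> cball 0 R"
  shows "norm (a - b) \<le> 2 * norm (psi e a - psi e b)"
proof -
  note gf = good_facts[OF assms(1)]
  have eq: "a - b = (psi e a - psi e b) - of_real e * (gfun a - gfun b)"
    by (simp add: psi_def algebra_simps)
  have "norm (of_real e * (gfun a - gfun b)) = e * norm (gfun a - gfun b)"
    using gf by (simp add: norm_mult)
  also have "\<dots> \<le> e * ((exp R + 1) * norm (a - b))"
    using gf g_lip[OF assms(2,3)] by (intro mult_left_mono) auto
  also have "\<dots> = (e * (exp R + 1)) * norm (a - b)" by simp
  also have "\<dots> \<le> 1/2 * norm (a - b)" using gf by (intro mult_right_mono) auto
  finally have "norm (of_real e * (gfun a - gfun b)) \<le> 1/2 * norm (a - b)" .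
  moreover have "norm (a - b) \<le> norm (psi e a - psi e b) + norm (of_real e * (gfun a - gfun b))"
    by (subst eq) (rule norm_triangle_ineq4)
  ultimately show ?thesis by linarith
qed

lemma psi_inj:
  assumes "good e R" "a \<in> cball 0 R" "b \<in> cball 0 R" "psi e a = psi e b"
  shows "a = b"
  using psi_lower[OF assms(1-3)] assms(4) by simp

lemma psi_surj:
  assumes "good e R" "norm w \<le> R/2"
  shows "\<exists>z\<in>cball 0 R. psi e z = w"
proof -
  note gf = good_facts[OF assms(1)]
  define T where "T z = w - of_real e * gfun z" for z
  have "\<exists>!z\<in>cball 0 R. T z = z"
  proof (rule Banach_fix[where c="1/2"])
    show "complete (cball (0::complex) R)" by (simp add: compact_imp_complete)
    show "cball (0::complex) R \<noteq> {}" using gf by simp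
    show "T ` cball 0 R \<subseteq> cball 0 R"
    proof clarify
      fix z :: complex assume z: "z \<in> cball 0 R"
      have "norm (of_real e * gfun z) = e * norm (gfun z)" using gf by (simp add: norm_mult)
      also have "\<dots> \<le> e * (exp R + 1 + R)" using gf g_bound[of z R] z by (intro mult_left_mono) auto
      finally have "norm (of_real e * gfun z) \<le> 1/2" using gf by linarith
      then have "norm (T z) \<le> R/2 + 1/2" unfolding T_def
        using norm_triangle_ineq4[of w "of_real e * gfun z"] assms(2) by linarith
      then show "T z \<in> cball 0 R" using gf by simp
    qed
    fix x y :: complex assume xy: "x \<in> cball 0 R" "y \<in> cball 0 R"
    have "T x - T y = of_real e * (gfun y - gfun x)" by (simp add: T_def algebra_simps)
    then have "dist (T x) (T y) = e * norm (gfun x - gfun y)"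
      using gf by (simp add: dist_norm norm_mult norm_minus_commute)
    also have "\<dots> \<le> e * ((exp R + 1) * norm (x - y))" using gf g_lip[OF xy] by (intro mult_left_mono) auto
    also have "\<dots> = (e * (exp R + 1)) * norm (x - y)" by simp
    also have "\<dots> \<le> 1/2 * norm (x - y)" using gf by (intro mult_right_mono) auto
    also have "\<dots> = 1/2 * dist x y" by (simp add: dist_norm)
    finally show "dist (T x) (T y) \<le> 1/2 * dist x y" .
  qed auto
  then obtain z where "z \<in> cball 0 R" "T z = z" by blast
  then show ?thesis unfolding T_def psi_def by (intro bexI[of _ z]) (auto simp: algebra_simps)
qed

definition Phi :: "real \<Rightarrow> real \<Rightarrow> complex \<Rightarrow> complex" where
  "Phi e R w = (THE z. z \<in> cball 0 R \<and> psi e z = w)"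

lemma Phi:
  assumes "good e R" "norm w \<le> R/2"
  shows "Phi e R w \<in> cball 0 R" "psi e (Phi e R w) = w"
proof -
  obtain z where z: "z \<in> cball 0 R" "psi e z = w" using psi_surj[OF assms] by blast
  have "Phi e R w = z" unfolding Phi_def
    by (rule the_equality) (use z psi_inj[OF assms(1)] in auto)
  then show "Phi e R w \<in> cball 0 R" "psi e (Phi e R w) = w" using z by auto
qed

lemma Phi_psi:
  assumes "good e R" "z \<in> cball 0 R" "norm (psi e z) \<le> R/2"
  shows "Phi e R (psi e z) = z"
  using Phi[OF assms(1,3)] psi_inj[OF assms(1)] assms(2) by blast

lemma Phi_lip:
  assumes "good e R" "norm a \<le> R/2" "norm b \<le> R/2"
  shows "norm (Phi e R a - Phi e R b) \<le> 2 * norm (a - b)"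
  using psi_lower[OF assms(1) Phi(1)[OF assms(1,2)] Phi(1)[OF assms(1,3)]]
    Phi(2)[OF assms(1,2)] Phi(2)[OF assms(1,3)] by simp

lemma Phi_cont:
  assumes "good e R"
  shows "continuous_on (cball 0 (R/2)) (Phi e R)"
  unfolding continuous_on_iff
proof clarify
  fix x :: complex and d :: real assume x: "x \<in> cball 0 (R/2)" and d: "0 < d"
  show "\<exists>s>0. \<forall>x'\<in>cball 0 (R / 2). dist x' x < s \<longrightarrow> dist (Phi e R x') (Phi e R x) < d"
  proof (intro exI[of _ "d/2"] conjI ballI impI)
    fix x' :: complex assume x': "x' \<in> cball 0 (R/2)" "dist x' x < d/2"
    have "norm (Phi e R x' - Phi e R x) \<le> 2 * norm (x' - x)"
      using x x' by (intro Phi_lip[OF assms]) auto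
    then show "dist (Phi e R x') (Phi e R x) < d" using x' by (simp add: dist_norm)
  qed (use d in auto)
qed

lemma psi0 [simp]: "psi e 0 = 0" by (simp add: psi_def gfun_def)
lemma FF0 [simp]: "FF e 0 = 0" by (simp add: FF_def)
lemma FF_zero_eq: "FF 0 = (\<lambda>z. exp z - 1)" by (simp add: FF_def psi_def fun_eq_iff)

lemma Phi0:
  assumes "good e R" shows "Phi e R 0 = 0"
  using Phi_psi[OF assms, of 0] good_facts[OF assms] by simp

lemma FF_Phi:
  assumes "good e R" "norm w \<le> R/2"
  shows "FF e (Phi e R w) = exp w - 1"
  using Phi(2)[OF assms] by (simp add: FF_def)

lemma div_aux: "(c::complex) \<noteq> 0 \<Longrightarrow> 2 * z / c / (2 / c) = z" by (simp add: field_simps)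

lemma sq_less_iff: "0 \<le> (a::real) \<Longrightarrow> 0 \<le> b \<Longrightarrow> a < b \<longleftrightarrow> a^2 < b^2"
  by (auto intro: power_less_imp_less_base power_strict_mono)

lemma alg_aux: "0 \<le> (s::real) \<Longrightarrow> 4 * s / (1 + s)^2 + (2 * s / (s + 1))^2 = 4 * s / (1 + s)"
proof -
  assume "0 \<le> s"
  then have h1: "1 + s \<noteq> 0" and h2: "s + 1 \<noteq> 0" by auto
  have "4 * s / (1 + s)^2 + (2 * s / (s + 1))^2 = (4 * s * (1 + s)) / (1+s)^2"
    using h1 h2 by (simp add: power_divide add.commute add_divide_distrib) (simp add: algebra_simps power2_eq_square add_divide_distrib)
  also have "\<dots> = 4 * s / (1 + s)" using h1 by (simp add: power2_eq_square)
  finally show ?thesis .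
qed

lemma sphere_emb_Some: "sphere_emb (Some z) =
   (2 * z / complex_of_real (1 + (cmod z)^2), ((cmod z)^2 - 1) / ((cmod z)^2 + 1))"
  by (simp add: sphere_emb_def)

lemma cont_emb: "continuous_on UNIV (\<lambda>z. sphere_emb (Some z))"
proof -
  have "\<And>z. complex_of_real (1 + (cmod z)^2) \<noteq> 0"
    by (metis of_real_eq_0_iff add_pos_nonneg zero_less_one zero_le_power2 less_irrefl)
  moreover have "\<And>z. (cmod z)^2 + 1 \<noteq> 0" by (metis add_pos_nonneg zero_less_one zero_le_power2 add.commute less_irrefl)
  ultimately show ?thesis unfolding sphere_emb_Some
    by (intro continuous_intros) auto
qed

lemma cont_Some: "continuous_on UNIV g \<Longrightarrow> continuous_map euclidean riemann_sphere (Some \<circ> g)"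
  unfolding riemann_sphere_def
proof (rule continuous_map_pullback')
  assume "continuous_on UNIV g"
  then have "continuous_on UNIV ((\<lambda>z. sphere_emb (Some z)) \<circ> g)"
    by (intro continuous_on_compose) (auto intro: continuous_on_subset[OF cont_emb])
  then show "continuous_map euclidean euclidean (sphere_emb \<circ> (Some \<circ> g))"
    by (simp add: o_def)
qed auto

lemma topspace_rs [simp]: "topspace riemann_sphere = UNIV"
  by (simp add: riemann_sphere_def topspace_pullback_topology)

lemma open_Some: assumes "open A" shows "openin riemann_sphere (Some ` A)"
  unfolding riemann_sphere_def openin_pullback_topology
proof (intro exI conjI)
  let ?U = "{p::complex\<times>real. snd p < 1} \<inter> (\<lambda>p. fst p / complex_of_real (1 - snd p)) -` A"
  have o1: "open {p::complex\<times>real. snd p < 1}"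
    by (intro open_Collect_less continuous_intros)
  have "continuous_on {p::complex\<times>real. snd p < 1} (\<lambda>p. fst p / complex_of_real (1 - snd p))"
    by (intro continuous_intros) auto
  then have "open ((\<lambda>p. fst p / complex_of_real (1 - snd p)) -` A \<inter> {p::complex\<times>real. snd p < 1})"
    using continuous_on_open_vimage[OF o1] assms by blast
  then show "openin euclidean ?U" by (simp add: Int_commute)
  show "Some ` A = sphere_emb -` ?U \<inter> UNIV"
  proof (rule set_eqI)
    fix q show "q \<in> Some ` A \<longleftrightarrow> q \<in> sphere_emb -` ?U \<inter> UNIV"
    proof (cases q)
      case None then show ?thesis by (auto simp: sphere_emb_def)
    next
      case (Some z)
      define s where "s = (cmod z)^2"
      have s0: "0 \<le> s" by (simp add: s_def)
      have lt: "(s - 1) / (s + 1) < 1" using s0 by (simp add: field_simps)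
      have eq: "1 - (s - 1) / (s + 1) = 2 / (s + 1)" using s0 by (simp add: field_simps)
      have c0: "complex_of_real (1 + s) \<noteq> 0" using s0 by (metis of_real_eq_0_iff add_pos_nonneg zero_less_one less_irrefl)
      have c2: "complex_of_real (2 / (s + 1)) = 2 / complex_of_real (1 + s)" by (simp add: add.commute)
      have "2 * z / complex_of_real (1 + s) / complex_of_real (2 / (s + 1)) = z"
        unfolding c2 using c0 by (rule div_aux)
      then have k: "fst (sphere_emb (Some z)) / complex_of_real (1 - snd (sphere_emb (Some z))) = z"
        and sn: "snd (sphere_emb (Some z)) < 1"
        using lt eq by (simp_all add: sphere_emb_Some s_def)
      have "q \<in> sphere_emb -` ?U \<inter> UNIV \<longleftrightarrow> snd (sphere_emb (Some z)) < 1 \<and>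
          fst (sphere_emb (Some z)) / complex_of_real (1 - snd (sphere_emb (Some z))) \<in> A"
        using Some by simp
      then show ?thesis using k sn Some by auto
    qed
  qed
qed

lemma open_map_Some: "open_map euclidean riemann_sphere Some"
  unfolding open_map_def using open_Some by auto

lemma Some_homeo: "homeomorphic_map euclidean (subtopology riemann_sphere (range Some)) Some"
proof (rule bijective_open_imp_homeomorphic_map)
  show "continuous_map euclidean (subtopology riemann_sphere (range Some)) Some"
    using cont_Some[of id] by (intro continuous_map_into_subtopology) auto
  show "open_map euclidean (subtopology riemann_sphere (range Some)) Some"
    by (intro open_map_into_subtopology open_map_Some) auto
qed (auto simp: inj_on_def)

lemma Some_homeo_sub:
  "homeomorphic_map (top_of_set B) (subtopology riemann_sphere (Some ` B)) Some"
proof -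
  have "homeomorphic_map (subtopology euclidean B) (subtopology (subtopology riemann_sphere (range Some)) (Some ` B)) Some"
    by (rule homeomorphic_map_subtopologies[OF Some_homeo]) auto
  moreover have "subtopology (subtopology riemann_sphere (range Some)) (Some ` B) = subtopology riemann_sphere (Some ` B)"
    by (simp add: subtopology_subtopology Int_absorb1 image_mono)
  ultimately show ?thesis by simp
qed

lemma cont_map_Some: "continuous_on UNIV g \<Longrightarrow> continuous_map euclidean riemann_sphere (\<lambda>x. Some (g x))"
  using cont_Some[of g] by (simp add: o_def)

lemma open_map_Some_comp:
  fixes g :: "complex \<Rightarrow> complex"
  assumes "\<And>U. open U \<Longrightarrow> open (g ` U)"
  shows "open_map euclidean riemann_sphere (Some \<circ> g)"
  unfolding open_map_def
proof clarify
  fix U :: "complex set" assume "openin euclidean U"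
  then have "openin riemann_sphere (Some ` (g ` U))" using assms open_Some by simp
  then show "openin riemann_sphere ((Some \<circ> g) ` U)" by (simp add: image_comp)
qed

lemma dist_emb0: "dist (sphere_emb (Some 0)) (sphere_emb (Some z)) ^ 2 = 4 * (cmod z)^2 / (1 + (cmod z)^2)"
proof -
  define s where "s = (cmod z)^2"
  have s0: "0 \<le> s" by (simp add: s_def)
  have "cmod (complex_of_real (1 + s)) = 1 + s" using s0 by (subst norm_of_real) simp
  then have n1: "norm (2 * z / complex_of_real (1 + s)) = 2 * cmod z / (1 + s)"
    by (simp only: norm_divide norm_mult) simp
  have e0: "sphere_emb (Some 0) = (0, -1)" by (simp add: sphere_emb_def)
  have ez: "sphere_emb (Some z) = (2*z/complex_of_real(1+s), (s-1)/(s+1))" by (simp add: sphere_emb_Some s_def)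
  have "dist (sphere_emb (Some 0)) (sphere_emb (Some z)) ^ 2
      = (dist 0 (2*z/complex_of_real(1+s)))^2 + (dist (-1) ((s-1)/(s+1)))^2"
    unfolding e0 ez dist_Pair_Pair by simp
  also have "dist (-1) ((s-1)/(s+1)) = 2 * s / (s + 1)"
    using s0 by (simp add: dist_real_def field_simps)
  also have "dist 0 (2*z/complex_of_real(1+s)) = 2 * cmod z / (1 + s)"
    by (simp only: dist_0_norm n1)
  finally have "dist (sphere_emb (Some 0)) (sphere_emb (Some z)) ^ 2
      = (2 * cmod z / (1 + s))^2 + (2 * s / (s + 1))^2" .
  also have "(2 * cmod z / (1 + s))^2 = 4 * s / (1 + s)^2"
    by (simp add: power_divide power_mult_distrib s_def)
  also have "4 * s / (1 + s)^2 + (2 * s / (s + 1))^2 = 4 * s / (1 + s)" using s0 by (rule alg_aux)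
  finally show ?thesis by (simp add: s_def)
qed

lemma sball_eq: "sball (Some 0) (10/13) = Some ` ball 0 (5/12)"
proof (rule set_eqI)
  fix q show "q \<in> sball (Some 0) (10/13) \<longleftrightarrow> q \<in> Some ` ball 0 (5/12)"
  proof (cases q)
    case None
    have "dist (sphere_emb (Some 0)) (sphere_emb None) = 2"
      by (simp add: sphere_emb_def dist_Pair_Pair dist_real_def)
    then show ?thesis using None by (simp add: sball_def)
  next
    case (Some z)
    define d where "d = dist (sphere_emb (Some 0)) (sphere_emb (Some z))"
    define s where "s = (cmod z)^2"
    have d0: "0 \<le> d" by (simp add: d_def)
    have s0: "0 \<le> s" by (simp add: s_def)
    have dsq: "d^2 = 4 * s / (1 + s)" unfolding d_def s_def by (rule dist_emb0)
    have "d < 10/13 \<longleftrightarrow> d^2 < (10/13)^2"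
      using d0 by (intro sq_less_iff) auto
    also have "\<dots> \<longleftrightarrow> s < (5/12)^2" using s0 unfolding dsq by (simp add: field_simps)
    also have "\<dots> \<longleftrightarrow> cmod z < 5/12" unfolding s_def
      by (rule sq_less_iff[symmetric]) auto
    finally show ?thesis using Some by (auto simp: sball_def d_def)
  qed
qed

lemma exp2_le: "exp (2::real) \<le> 9"
proof -
  have "exp (2::real) = exp 1 * exp 1" by (simp flip: exp_add)
  also have "\<dots> \<le> 3 * 3" using exp_le by (intro mult_mono) auto
  finally show ?thesis by simp
qed

lemma good2: "0 \<le> e \<Longrightarrow> e \<le> 1/30 \<Longrightarrow> good e 2"
proof -
  assume e: "0 \<le> e" "e \<le> 1/30"
  have "e * (exp 2 + 1 + 2) \<le> 1/30 * 12"
    using e exp2_le by (intro mult_mono) auto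
  then show "good e 2" using e by (simp add: good_def)
qed

lemma FF_holo: "FF e holomorphic_on UNIV"
  unfolding FF_def psi_def gfun_def by (intro holomorphic_intros)

lemma FF_cont: "continuous_on UNIV (FF e)"
  using FF_holo holomorphic_on_imp_continuous_on by blast

lemma ln_small:
  assumes "norm (w::complex) < 5/12"
  shows "norm (ln (1 + w)) \<le> 1" "1 + w \<notin> \<real>\<^sub>\<le>\<^sub>0" "1 + w \<noteq> 0"
proof -
  have a: "norm (ln (1 + w) - w) \<le> norm w^2 / (1 - norm w)"
    using Ln_approx_linear[of w] assms by simp
  have "norm w^2 / (1 - norm w) \<le> (5/12)^2 / (7/12)"
    using assms by (intro frac_le power_mono) auto
  then have "norm (ln (1 + w)) \<le> norm w + (5/12)^2 / (7/12)"
    using a norm_triangle_ineq2[of "ln (1+w)" w] by linarith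
  moreover have "(5/12::real)^2 / (7/12) = 25/84" by (simp add: power2_eq_square)
  ultimately show "norm (ln (1 + w)) \<le> 1" using assms by linarith
  have "Re (1 + w) > 0" using assms abs_Re_le_cmod[of w] by auto
  then show "1 + w \<notin> \<real>\<^sub>\<le>\<^sub>0" by (simp add: complex_nonpos_Reals_iff)
  show "1 + w \<noteq> 0"
  proof
    assume "1 + w = 0" then have "Re (1 + w) = 0" by simp
    with \<open>Re (1 + w) > 0\<close> show False by simp
  qed
qed

definition G :: "real \<Rightarrow> complex \<Rightarrow> complex" where "G e w = Phi e 2 (ln (1 + w))"

definition rho :: real where "rho = 5/12"

lemma G_props:
  assumes "0 \<le> e" "e \<le> 1/30" "norm w < 5/12"
  shows "FF e (G e w) = w" "G e w \<in> cball 0 2"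
proof -
  have g: "good e 2" using good2 assms by simp
  have "norm (ln (1+w)) \<le> 2/2" using ln_small[OF assms(3)] by simp
  from FF_Phi[OF g this] Phi(1)[OF g this] ln_small[OF assms(3)]
  show "FF e (G e w) = w" "G e w \<in> cball 0 2" by (simp_all add: G_def)
qed

lemma G0: assumes "0 \<le> e" "e \<le> 1/30" shows "G e 0 = 0"
  using Phi0[OF good2[OF assms]] by (simp add: G_def)

lemma G_cont: assumes "0 \<le> e" "e \<le> 1/30" shows "continuous_on (ball 0 (5/12)) (G e)"
proof -
  have g: "good e 2" using good2 assms by simp
  have c1: "continuous_on (ball 0 (5/12)) (\<lambda>w::complex. ln (1 + w))"
    by (intro continuous_intros) (use ln_small in auto)
  have "continuous_on (ball 0 (5/12)) (Phi e 2 \<circ> (\<lambda>w::complex. ln (1 + w)))"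
  proof (rule continuous_on_compose[OF c1])
    show "continuous_on ((\<lambda>w. ln (1 + w)) ` ball 0 (5 / 12)) (Phi e 2)"
      by (rule continuous_on_subset[OF Phi_cont[OF g]]) (use ln_small in auto)
  qed
  then show ?thesis by (simp add: G_def o_def)
qed

definition WW :: "real \<Rightarrow> complex set" where "WW e = G e ` ball 0 (5/12)"

lemma WW_props:
  assumes "0 \<le> e" "e \<le> 1/30"
  shows "open (WW e)" "connected (WW e)" "0 \<in> WW e" "inj_on (FF e) (WW e)"
    "homeomorphic_map (top_of_set (WW e)) (subtopology riemann_sphere (sball (Some 0) (10/13))) (Some \<circ> FF e)"
proof -
  note Gc = G_cont[OF assms]
  have inj: "inj_on (G e) (ball 0 (5/12))"
    by (rule inj_on_inverseI[where g="FF e"]) (use G_props[OF assms] in auto)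
  show "open (WW e)" unfolding WW_def by (rule invariance_of_domain[OF Gc open_ball inj])
  show "connected (WW e)" unfolding WW_def by (rule connected_continuous_image[OF Gc connected_ball])
  show "0 \<in> WW e" unfolding WW_def using G0[OF assms] by (intro image_eqI[of _ _ 0]) auto
  show "inj_on (FF e) (WW e)" unfolding WW_def
    by (rule inj_on_inverseI[where g="G e"]) (use G_props[OF assms] in auto)
  have hm: "homeomorphic_maps (top_of_set (WW e)) (top_of_set (ball 0 (5/12))) (FF e) (G e)"
    unfolding homeomorphic_maps_def
  proof (intro conjI)
    show "continuous_map (top_of_set (WW e)) (top_of_set (ball 0 (5 / 12))) (FF e)"
      by (intro continuous_map_into_subtopology)
        (auto simp: WW_def G_props[OF assms] intro: continuous_on_subset[OF FF_cont])
    show "continuous_map (top_of_set (ball 0 (5 / 12))) (top_of_set (WW e)) (G e)"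
      by (intro continuous_map_into_subtopology) (auto simp: WW_def Gc)
  qed (auto simp: WW_def G_props[OF assms])
  then have h1: "homeomorphic_map (top_of_set (WW e)) (top_of_set (ball 0 (5/12))) (FF e)"
    using homeomorphic_map_maps by blast
  show "homeomorphic_map (top_of_set (WW e)) (subtopology riemann_sphere (sball (Some 0) (10/13))) (Some \<circ> FF e)"
    unfolding sball_eq by (rule homeomorphic_map_compose[OF h1 Some_homeo_sub])
qed

lemma FF_nonconst: assumes "0 \<le> e" "e \<le> 1/30" shows "\<not> FF e constant_on UNIV"
proof
  assume "FF e constant_on UNIV"
  then obtain y where "\<forall>x. FF e x = y" by (auto simp: constant_on_def)
  then have "FF e (G e (1/4)) = FF e 0" by metis
  then show False using G_props[OF assms, of "1/4"] by simp
qed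

lemma open_surface_C: "open_surface (euclidean :: complex topology)"
  unfolding open_surface_def
proof (intro conjI ballI)
  show "connected_space (euclidean :: complex topology)"
    using connectedin_topspace[of "euclidean :: complex topology"] connectedin_iff_connected by auto
  show "Hausdorff_space (euclidean :: complex topology)" by simp
  show "second_countable (euclidean :: complex topology)"
  proof -
    obtain B :: "complex set set" where B: "countable B" "\<And>C. C \<in> B \<Longrightarrow> open C"
      "\<And>S. open S \<Longrightarrow> \<exists>U. U \<subseteq> B \<and> S = \<Union>U"
      using univ_second_countable by blast
    show ?thesis unfolding second_countable_def
    proof (intro exI[of _ B] conjI allI impI ballI)
      fix U :: "complex set" and x assume "openin euclidean U \<and> x \<in> U"
      then obtain UU where "UU \<subseteq> B" "U = \<Union>UU" using B(3) by auto
      then show "\<exists>V\<in>B. x \<in> V \<and> V \<subseteq> U" using \<open>openin euclidean U \<and> x \<in> U\<close> by auto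
    qed (use B in auto)
  qed
  show "\<not> compact_space (euclidean :: complex topology)"
    by (simp add: compact_space_def compactin_euclidean_iff compact_eq_bounded_closed not_bounded_UNIV)
  fix x :: complex
  show "\<exists>U. openin euclidean U \<and> x \<in> U \<and> (\<exists>V::complex set. open V \<and> subtopology euclidean U homeomorphic_space top_of_set V)"
    by (intro exI[of _ UNIV]) (auto intro: homeomorphic_space_refl)
qed

lemma FF_pointed:
  assumes "0 \<le> e" "e \<le> 1/30"
  shows "pointed_surface (euclidean :: complex topology) (Some \<circ> FF e) 0"
  unfolding pointed_surface_def spread_surface_def
proof (intro conjI allI)
  show "open_surface (euclidean :: complex topology)" by (rule open_surface_C)
  show "continuous_map euclidean riemann_sphere (Some \<circ> FF e)" by (rule cont_Some[OF FF_cont])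
  show "open_map euclidean riemann_sphere (Some \<circ> FF e)"
    by (rule open_map_Some_comp) (rule open_mapping_thm[OF FF_holo open_UNIV connected_UNIV _ _ FF_nonconst[OF assms]], auto)
  show "0 \<in> topspace (euclidean :: complex topology)" by simp
  show "\<not> critical_point euclidean (Some \<circ> FF e) 0"
    unfolding critical_point_def using WW_props[OF assms]
    by (intro notI, elim notE, intro exI[of _ "WW e"]) (auto simp: inj_on_def)
  fix q
  show "discrete_subset euclidean {x \<in> topspace euclidean. (Some \<circ> FF e) x = q}"
    unfolding discrete_subset_def
  proof (intro conjI ballI)
    fix x :: complex
    show "\<exists>U. openin euclidean U \<and> x \<in> U \<and> finite (U \<inter> {x \<in> topspace euclidean. (Some \<circ> FF e) x = q})"
    proof (cases "q = Some (FF e x)")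
      case False
      have "open {y. FF e y \<noteq> FF e x \<or> y = x} \<or> True" by simp
      show ?thesis
      proof (cases q)
        case None then show ?thesis by (intro exI[of _ UNIV]) auto
      next
        case (Some c)
        have o: "open {y. FF e y \<noteq> c}"
          by (rule open_Collect_neq) (auto intro: continuous_on_subset[OF FF_cont] continuous_intros)
        have "{y. FF e y \<noteq> c} \<inter> {x \<in> topspace euclidean. (Some \<circ> FF e) x = q} = {}" using Some by auto
        then show ?thesis using False Some o by (intro exI[of _ "{y. FF e y \<noteq> c}"]) auto
      qed
    next
      case True
      define c where "c = FF e x"
      obtain b where b: "FF e b - c \<noteq> 0"
      proof (cases "c = 0")
        case True then show ?thesis using that[of "G e (1/4)"] G_props[OF assms, of "1/4"] by simp
      next
        case False then show ?thesis using that[of 0] by simp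
      qed
      have hol: "(\<lambda>z. FF e z - c) holomorphic_on UNIV" using FF_holo by (intro holomorphic_intros)
      obtain r where r: "0 < r" "\<And>z. z \<in> ball x r - {x} \<Longrightarrow> FF e z - c \<noteq> 0"
        using isolated_zeros[OF hol open_UNIV connected_UNIV, of x b] b by (auto simp: c_def)
      have "ball x r \<inter> {y \<in> topspace euclidean. (Some \<circ> FF e) y = q} \<subseteq> {x}"
      proof (rule subsetI)
        fix y assume "y \<in> ball x r \<inter> {y \<in> topspace euclidean. (Some \<circ> FF e) y = q}"
        then show "y \<in> {x}" using r(2)[of y] True by (auto simp: c_def)
      qed
      then show ?thesis using r by (intro exI[of _ "ball x r"]) (auto intro: finite_subset)
    qed
  qed simp
qed

lemma FF_deriv: "deriv (FF e) 0 = 1"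
proof -
  have "(FF e has_field_derivative (exp (psi e 0) * (1 + of_real e * (exp 0 - 1)))) (at 0)"
    unfolding FF_def psi_def gfun_def by (auto intro!: derivative_eq_intros)
  then show ?thesis by (auto dest: DERIV_imp_deriv)
qed

lemma FF_normalized:
  assumes "0 \<le> e" "e \<le> 1/30"
  shows "normalized_entire_triple (FF e)"
  unfolding normalized_entire_triple_def using FF_holo FF_pointed[OF assms] FF_deriv by simp

lemma mm_bdd: "bdd_above ((\<lambda>z. cmod (FF e z)) ` sphere 0 r)"
proof -
  have "compact ((\<lambda>z. cmod (FF e z)) ` sphere 0 r)"
    by (intro compact_continuous_image continuous_intros continuous_on_subset[OF FF_cont]) auto
  then show ?thesis by (intro bounded_imp_bdd_above compact_imp_bounded)
qed

lemma mm_lower: "0 \<le> r \<Longrightarrow> cmod (FF e (of_real r)) \<le> max_modulus (FF e) r"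
  unfolding max_modulus_def by (rule cSUP_upper[OF _ mm_bdd]) auto

lemma mm_upper0: "0 \<le> r \<Longrightarrow> max_modulus (FF 0) r \<le> exp r + 1"
  unfolding max_modulus_def
proof (rule cSUP_least)
  assume "0 \<le> r"
  show "sphere (0::complex) r \<noteq> {}" using \<open>0 \<le> r\<close> by simp
  fix z :: complex assume "z \<in> sphere 0 r"
  then have "norm z \<le> r" by simp
  then show "cmod (FF 0 z) \<le> exp r + 1" using gderiv_bound[of z r] by (simp add: FF_zero_eq)
qed

lemma psi_real: "psi e (of_real r) = of_real (r + e * (exp r - 1 - r))"
  by (simp add: psi_def gfun_def exp_of_real)

lemma FF_real: "FF e (of_real r) = of_real (exp (r + e * (exp r - 1 - r)) - 1)"
proof -
  have "FF e (of_real r) = exp (of_real (r + e * (exp r - 1 - r))) - 1" by (simp only: FF_def psi_real)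
  also have "\<dots> = of_real (exp (r + e * (exp r - 1 - r)) - 1)" by (simp only: exp_of_real of_real_diff of_real_1)
  finally show ?thesis .
qed

lemma FF_real_norm:
  assumes "0 \<le> e" "0 \<le> r"
  shows "cmod (FF e (of_real r)) = exp (r + e * (exp r - 1 - r)) - 1"
proof -
  have "0 \<le> exp r - 1 - r" using exp_ge_add_one_self[of r] by linarith
  then have "0 \<le> r + e * (exp r - 1 - r)" using assms by simp
  then have "1 \<le> exp (r + e * (exp r - 1 - r))" by simp
  then show ?thesis by (simp only: FF_real norm_of_real)
qed

lemma exp_ge_sq: "2 \<le> (r::real) \<Longrightarrow> exp 1 + 1 \<le> exp r - 1"
proof -
  assume r: "2 \<le> r"
  have "exp 1 \<ge> (2::real)" using exp_ge_add_one_self[of 1] by simp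
  have "exp (2::real) = exp 1 * exp 1" by (simp flip: exp_add)
  also have "\<dots> \<ge> 2 * exp 1" using \<open>exp 1 \<ge> 2\<close> by (intro mult_right_mono) auto
  finally have "exp 2 \<ge> 2 * exp (1::real)" .
  moreover have "exp 2 \<le> exp r" using r by simp
  ultimately show ?thesis using \<open>exp 1 \<ge> 2\<close> by linarith
qed

lemma ln_mono': "0 < x \<Longrightarrow> x \<le> y \<Longrightarrow> ln x \<le> ln (y::real)"
  by (subst ln_le_cancel_iff) auto

definition hfun :: "(complex \<Rightarrow> complex) \<Rightarrow> real \<Rightarrow> real" where
  "hfun f r = ln (ln (max (exp 1) (max_modulus f r))) / ln r"

lemma order_FF0: "entire_order (FF 0) = 1"
proof -
  have ev: "eventually (\<lambda>r. ln (ln (exp r - 1)) / ln r \<le> hfun (FF 0) r \<and> hfun (FF 0) r \<le> ln (ln (exp r + 1)) / ln r) at_top"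
    using eventually_ge_at_top[of "2::real"]
  proof eventually_elim
    case (elim r)
    define M where "M = max_modulus (FF 0) r"
    have l: "exp r - 1 \<le> M" using mm_lower[of r 0] FF_real_norm[of 0 r] elim by (simp add: M_def)
    have u: "M \<le> exp r + 1" using mm_upper0[of r] elim by (simp add: M_def)
    have e1: "exp 1 + 1 \<le> exp r - 1" by (rule exp_ge_sq[OF elim])
    have mx: "max (exp 1) M = M" using l e1 by simp
    have p1: "1 < exp r - 1" using e1 exp_gt_zero[of 1] by linarith
    have lp: "0 < ln (exp r - 1)" using p1 by (intro ln_gt_zero)
    have lM: "ln (exp r - 1) \<le> ln M" using l p1 elim by (intro ln_mono') auto
    have a: "ln (ln (exp r - 1)) \<le> ln (ln M)" using lp lM by (rule ln_mono')
    have lM2: "ln M \<le> ln (exp r + 1)" using l u p1 elim by (intro ln_mono') auto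
    have b: "ln (ln M) \<le> ln (ln (exp r + 1))" using lp lM lM2 l u p1 elim by (intro ln_mono') auto
    have lr: "0 < ln r" using elim by simp
    show ?case unfolding hfun_def mx M_def[symmetric] using a b lr
      by (auto intro: divide_right_mono)
  qed
  have t1: "((\<lambda>r::real. ln (ln (exp r - 1)) / ln r) \<longlongrightarrow> 1) at_top" by real_asymp
  have t2: "((\<lambda>r::real. ln (ln (exp r + 1)) / ln r) \<longlongrightarrow> 1) at_top" by real_asymp
  have "(hfun (FF 0) \<longlongrightarrow> 1) at_top"
    by (rule tendsto_sandwich[OF _ _ t1 t2]) (use ev in \<open>auto elim: eventually_mono\<close>)
  then have "((\<lambda>r. ereal (hfun (FF 0) r)) \<longlongrightarrow> ereal 1) at_top" by (simp add: lim_ereal)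
  then have "Limsup at_top (\<lambda>r. ereal (hfun (FF 0) r)) = ereal 1" by (intro lim_imp_Limsup) auto
  then show ?thesis by (simp add: entire_order_def hfun_def one_ereal_def)
qed

lemma exp_minus_lin: "2 \<le> r \<Longrightarrow> 0 < exp r - 1 - (r::real)"
proof -
  assume r: "2 \<le> r"
  have "exp r = exp (r/2) * exp (r/2)" by (simp flip: exp_add)
  also have "\<dots> \<ge> (1 + r/2) * (1 + r/2)"
    using exp_ge_add_one_self[of "r/2"] r by (intro mult_mono) auto
  finally have "exp r \<ge> 1 + r + r*r/4" by (simp add: algebra_simps)
  moreover have "r * r / 4 > 0" using r by simp
  ultimately show ?thesis by linarith
qed

lemma order_FF_pos:
  assumes e: "0 < e"
  shows "entire_order (FF e) = \<infinity>"
proof -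
  have ev: "eventually (\<lambda>r. ln e / ln r + ln (exp r - 1 - r) / ln r \<le> hfun (FF e) r) at_top"
    using eventually_ge_at_top[of "2::real"]
  proof eventually_elim
    case (elim r)
    define M where "M = max_modulus (FF e) r"
    define q where "q = exp r - 1 - r"
    define p where "p = r + e * q"
    have q0: "0 < q" unfolding q_def by (rule exp_minus_lin[OF elim])
    have eq0: "0 < e * q" using e q0 by simp
    have p2: "r \<le> p" using eq0 by (simp add: p_def)
    have l: "exp p - 1 \<le> M" using mm_lower[of r e] FF_real_norm[of e r] elim e by (simp add: M_def p_def q_def)
    have "exp p = exp (p - 1) * exp 1" by (simp flip: exp_add)
    moreover have "1 \<le> exp (p - 1)" using p2 elim by simp
    moreover have "2 \<le> exp (1::real)" using exp_ge_add_one_self[of 1] by simp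
    ultimately have "exp p - exp (p - 1) = exp (p - 1) * (exp 1 - 1)" and "exp (p - 1) * (exp 1 - 1) \<ge> 1 * 1"
      by (simp add: algebra_simps, intro mult_mono, auto)
    then have "exp (p - 1) \<le> exp p - 1" by linarith
    then have m1: "exp (p - 1) \<le> max (exp 1) M" using l by simp
    have "ln (exp (p - 1)) \<le> ln (max (exp 1) M)"
      using m1 by (intro ln_mono') auto
    then have "e * q \<le> ln (max (exp 1) M)" using elim by (simp add: p_def)
    then have "ln (e * q) \<le> ln (ln (max (exp 1) M))"
      using eq0 by (intro ln_mono') auto
    then have "ln e + ln q \<le> ln (ln (max (exp 1) M))" using e q0 by (simp add: ln_mult)
    moreover have lr: "0 < ln r" using elim by simp
    ultimately have "(ln e + ln q) / ln r \<le> hfun (FF e) r"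
      unfolding hfun_def M_def by (intro divide_right_mono) auto
    then show ?case by (simp add: q_def add_divide_distrib)
  qed
  have t1: "((\<lambda>r::real. ln e / ln r) \<longlongrightarrow> 0) at_top" by real_asymp
  have t2: "filterlim (\<lambda>r::real. ln (exp r - 1 - r) / ln r) at_top at_top" by real_asymp
  have "filterlim (\<lambda>r. ln e / ln r + ln (exp r - 1 - r) / ln r) at_top at_top"
    by (rule filterlim_tendsto_add_at_top[OF t1 t2])
  then have "filterlim (hfun (FF e)) at_top at_top"
    by (rule filterlim_at_top_mono) (use ev in auto)
  then have "((\<lambda>r. ereal (hfun (FF e) r)) \<longlongrightarrow> \<infinity>) at_top" by (simp add: tendsto_PInfty_eq_at_top)
  then have "Limsup at_top (\<lambda>r. ereal (hfun (FF e) r)) = \<infinity>" by (intro lim_imp_Limsup) auto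
  then show ?thesis by (simp add: entire_order_def hfun_def)
qed

definition eps :: "nat \<Rightarrow> real" where "eps n = 1 / (real n + 30)"

lemma eps_bounds: "0 \<le> eps n" "eps n \<le> 1/30"
  by (auto simp: eps_def field_simps)

lemma FF_psi: "FF e z = FF 0 (psi e z)"
  by (simp add: FF_def psi_def)

lemma kernel_cond_FF0:
  assumes es: "\<And>n. 0 \<le> es n" "\<And>n. es n \<le> 1 / (real n + 30)"
  shows "kernel_cond (\<lambda>n. euclidean) (\<lambda>n. Some \<circ> FF (es n)) (\<lambda>n. 0) (euclidean :: complex topology) (Some \<circ> FF 0) 0"
  unfolding kernel_cond_def
proof (intro conjI exI[of _ "{}"] allI impI)
  show "pointed_surface euclidean (Some \<circ> FF 0) 0" by (rule FF_pointed) auto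
  show "discrete_subset euclidean ({}::complex set)" unfolding discrete_subset_def
    by (auto intro: exI[of _ UNIV])
  show "(0::complex) \<notin> {}" by simp
  fix K :: "complex set"
  assume K: "compactin euclidean K \<and> K \<subseteq> topspace euclidean - {} \<and> 0 \<in> K"
  then have "compact K" by (simp add: compactin_euclidean_iff)
  then obtain B where B: "\<And>x. x \<in> K \<Longrightarrow> norm x \<le> B"
    by (meson bounded_iff compact_imp_bounded)
  define R where "R = max 2 (2 * B)"
  have R1: "1 \<le> R" by (simp add: R_def)
  have KR: "K \<subseteq> cball 0 (R/2)" using B by (force simp: R_def)
  define N where "N = nat \<lceil>2 * (exp R + 1 + R)\<rceil>"
  show "\<exists>N. \<forall>n>N. \<exists>\<phi>. continuous_map (subtopology euclidean K) euclidean \<phi> \<and> inj_on \<phi> K \<and>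
          \<phi> 0 = 0 \<and> (\<forall>x\<in>K. (Some \<circ> FF (es n)) (\<phi> x) = (Some \<circ> FF 0) x)"
  proof (intro exI[of _ N] allI impI)
    fix n assume n: "N < n"
    have pos: "0 < exp R + 1 + R" using R1 by (smt (verit) exp_gt_zero)
    have "2 * (exp R + 1 + R) \<le> real n + 30" using n unfolding N_def by linarith
    then have "es n * (exp R + 1 + R) \<le> 1 / (real n + 30) * (exp R + 1 + R)"
      using es(2)[of n] pos by (intro mult_right_mono) auto
    also have "\<dots> \<le> 1/2" using \<open>2 * (exp R + 1 + R) \<le> real n + 30\<close> pos by (simp add: field_simps)
    finally have g: "good (es n) R" using es(1)[of n] R1 by (simp add: good_def)
    show "\<exists>\<phi>. continuous_map (subtopology euclidean K) euclidean \<phi> \<and> inj_on \<phi> K \<and>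
          \<phi> 0 = 0 \<and> (\<forall>x\<in>K. (Some \<circ> FF (es n)) (\<phi> x) = (Some \<circ> FF 0) x)"
    proof (intro exI[of _ "Phi (es n) R"] conjI ballI)
      show "continuous_map (subtopology euclidean K) euclidean (Phi (es n) R)"
        using continuous_on_subset[OF Phi_cont[OF g] KR] by simp
      show "inj_on (Phi (es n) R) K"
        by (rule inj_on_inverseI[where g="psi (es n)"]) (use Phi(2)[OF g] KR in auto)
      show "Phi (es n) R 0 = 0" by (rule Phi0[OF g])
      fix x assume "x \<in> K"
      then show "(Some \<circ> FF (es n)) (Phi (es n) R x) = (Some \<circ> FF 0) x"
        using FF_Phi[OF g, of x] KR by (auto simp: FF_zero_eq)
    qed
  qed
qed

lemma standing_FF: "standing_assumption (\<lambda>n. euclidean) (\<lambda>n. Some \<circ> FF (eps n)) (\<lambda>n. 0)"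
  unfolding standing_assumption_def
proof (intro exI[of _ "Some 0"] exI[of _ "10/13::real"] exI[of _ "\<lambda>n. WW (eps n)"] conjI allI)
  fix n
  note W = WW_props[OF eps_bounds(1)[of n] eps_bounds(2)[of n]]
  show "openin euclidean (WW (eps n))" using W by simp
  show "connectedin euclidean (WW (eps n))" using W by (simp add: connectedin_iff_connected)
  show "(0::complex) \<in> WW (eps n)" using W by simp
  show "(Some \<circ> FF (eps n)) 0 = Some 0" by simp
  show "homeomorphic_map (subtopology euclidean (WW (eps n)))
          (subtopology riemann_sphere (sball (Some 0) (10 / 13))) (Some \<circ> FF (eps n))"
    using W by simp
qed simp

lemma chart_at:
  assumes "open_surface S1" "x \<in> topspace S1"
  obtains T V h k where "openin S1 T" "x \<in> T" "open (V::complex set)"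
    "homeomorphic_maps (subtopology S1 T) (top_of_set V) h k"
  using assms unfolding open_surface_def homeomorphic_space_def by metis

lemma hm_facts:
  fixes V :: "complex set"
  assumes V: "open V" and hm: "homeomorphic_maps (subtopology S1 T) (top_of_set V) h k" and T: "openin S1 T"
  shows "\<And>y. y \<in> T \<Longrightarrow> h y \<in> V" "\<And>y. y \<in> T \<Longrightarrow> k (h y) = y"
    "\<And>u. u \<in> V \<Longrightarrow> k u \<in> T" "\<And>u. u \<in> V \<Longrightarrow> h (k u) = u"
    "continuous_map (top_of_set V) S1 k"
    "\<And>A. A \<subseteq> V \<Longrightarrow> open A \<Longrightarrow> openin S1 (k ` A)"
    "\<And>A. A \<subseteq> T \<Longrightarrow> openin S1 A \<Longrightarrow> open (h ` A)"
    "continuous_map (subtopology S1 T) euclidean h"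
    "T \<subseteq> topspace S1"
proof -
  have Tt: "T \<subseteq> topspace S1" using T openin_subset by blast
  then show "T \<subseteq> topspace S1" .
  have tsT: "topspace (subtopology S1 T) = T" using Tt by (simp add: Int_absorb1)
  note hmd = hm[unfolded homeomorphic_maps_def]
  have ch: "continuous_map (subtopology S1 T) (top_of_set V) h" and ck: "continuous_map (top_of_set V) (subtopology S1 T) k"
    using hmd by auto
  show hV: "\<And>y. y \<in> T \<Longrightarrow> h y \<in> V" using continuous_map_image_subset_topspace[OF ch] tsT by auto
  show "\<And>y. y \<in> T \<Longrightarrow> k (h y) = y" using hmd tsT by auto
  show kT: "\<And>u. u \<in> V \<Longrightarrow> k u \<in> T" using continuous_map_image_subset_topspace[OF ck] tsT by auto
  show "\<And>u. u \<in> V \<Longrightarrow> h (k u) = u" using hmd by auto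
  show "continuous_map (top_of_set V) S1 k" using ck continuous_map_in_subtopology by blast
  show "continuous_map (subtopology S1 T) euclidean h" using ch continuous_map_in_subtopology by blast
  have hmk: "homeomorphic_map (top_of_set V) (subtopology S1 T) k"
    using hm homeomorphic_map_maps homeomorphic_maps_sym by blast
  have hmh: "homeomorphic_map (subtopology S1 T) (top_of_set V) h"
    using hm homeomorphic_map_maps by blast
  show "\<And>A. A \<subseteq> V \<Longrightarrow> open A \<Longrightarrow> openin S1 (k ` A)"
  proof -
    fix A :: "complex set" assume A: "A \<subseteq> V" "open A"
    have "openin (top_of_set V) A" using A V by (simp add: openin_open_eq)
    then have "openin (subtopology S1 T) (k ` A)" using homeomorphic_imp_open_map[OF hmk] open_map_def by blast
    then show "openin S1 (k ` A)" using openin_trans_full T by blast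
  qed
  show "\<And>A. A \<subseteq> T \<Longrightarrow> openin S1 A \<Longrightarrow> open (h ` A)"
  proof -
    fix A assume A: "A \<subseteq> T" "openin S1 A"
    have "A = A \<inter> T" using A by blast
    then have "openin (subtopology S1 T) A" using A unfolding openin_subtopology by blast
    then have "openin (top_of_set V) (h ` A)" using homeomorphic_imp_open_map[OF hmh] open_map_def by blast
    then show "open (h ` A)" using \<open>open V\<close> openin_open_trans by blast
  qed
qed


lemma open_embedding:
  fixes \<iota> :: "complex \<Rightarrow> 'b"
  assumes S: "open_surface S1" and c: "continuous_map euclidean S1 \<iota>" and inj: "inj \<iota>"
  shows "open_map euclidean S1 \<iota>"
  unfolding open_map_def
proof (intro allI impI)
  fix U :: "complex set" assume "openin euclidean U"
  then have oU: "open U" by simp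
  show "openin S1 (\<iota> ` U)"
  proof (subst openin_subopen, intro ballI)
    fix y assume "y \<in> \<iota> ` U"
    then obtain x where x: "x \<in> U" "y = \<iota> x" by blast
    have yt: "\<iota> x \<in> topspace S1" using c by (auto simp: continuous_map_def)
    obtain T V h k where T: "openin S1 T" "\<iota> x \<in> T" and V: "open (V::complex set)"
      and hm: "homeomorphic_maps (subtopology S1 T) (top_of_set V) h k"
      using chart_at[OF S yt] by blast
    note F = hm_facts[OF V hm T(1)]
    define Oo where "Oo = U \<inter> \<iota> -` T"
    have "openin euclidean {x \<in> topspace euclidean. \<iota> x \<in> T}"
      by (rule openin_continuous_map_preimage[OF c T(1)])
    then have "open (\<iota> -` T)" by (simp add: vimage_def)
    then have oO: "open Oo" using oU by (simp add: Oo_def open_Int)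
    have c1: "continuous_map (top_of_set Oo) (subtopology S1 T) \<iota>"
      by (intro continuous_map_into_subtopology continuous_map_from_subtopology c) (auto simp: Oo_def)
    have "continuous_map (top_of_set Oo) euclidean (h \<circ> \<iota>)"
      by (rule continuous_map_compose[OF c1 F(8)])
    then have cont: "continuous_on Oo (h \<circ> \<iota>)" by simp
    have injO: "inj_on (h \<circ> \<iota>) Oo"
    proof (rule inj_onI)
      fix a b assume ab: "a \<in> Oo" "b \<in> Oo" "(h \<circ> \<iota>) a = (h \<circ> \<iota>) b"
      then have "k (h (\<iota> a)) = k (h (\<iota> b))" by simp
      moreover have "\<iota> a \<in> T" "\<iota> b \<in> T" using ab by (auto simp: Oo_def)
      ultimately have "\<iota> a = \<iota> b" using F(2) by metis
      then show "a = b" using inj by (auto dest: injD)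
    qed
    have oimg: "open ((h \<circ> \<iota>) ` Oo)" by (rule invariance_of_domain[OF cont oO injO])
    have sub: "(h \<circ> \<iota>) ` Oo \<subseteq> V" using F(1) by (auto simp: Oo_def)
    have eq: "\<iota> ` Oo = k ` ((h \<circ> \<iota>) ` Oo)"
    proof -
      have "k ` ((h \<circ> \<iota>) ` Oo) = (\<lambda>a. k (h (\<iota> a))) ` Oo" by (simp add: image_image)
      also have "\<dots> = \<iota> ` Oo" using F(2) by (intro image_cong) (auto simp: Oo_def)
      finally show ?thesis by simp
    qed
    have "openin S1 (\<iota> ` Oo)" unfolding eq by (rule F(6)[OF sub oimg])
    moreover have "y \<in> \<iota> ` Oo" using x T by (auto simp: Oo_def)
    moreover have "\<iota> ` Oo \<subseteq> \<iota> ` U" by (auto simp: Oo_def)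
    ultimately show "\<exists>T. openin S1 T \<and> y \<in> T \<and> T \<subseteq> \<iota> ` U" by blast
  qed
qed

lemma embedding_homeo:
  fixes \<iota> :: "complex \<Rightarrow> 'b"
  assumes S: "open_surface S1" and c: "continuous_map euclidean S1 \<iota>" and inj: "inj \<iota>"
  shows "homeomorphic_map euclidean (subtopology S1 (range \<iota>)) \<iota>"
proof (rule bijective_open_imp_homeomorphic_map)
  have rt: "range \<iota> \<subseteq> topspace S1" using c by (auto simp: continuous_map_def)
  show "continuous_map euclidean (subtopology S1 (range \<iota>)) \<iota>"
    by (intro continuous_map_into_subtopology c) auto
  show "open_map euclidean (subtopology S1 (range \<iota>)) \<iota>"
    by (intro open_map_into_subtopology open_embedding[OF S c inj]) auto
  show "\<iota> ` topspace euclidean = topspace (subtopology S1 (range \<iota>))" using rt by auto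
  show "inj_on \<iota> (topspace euclidean)" using inj by simp
qed

lemma lift_in_image:
  fixes \<iota> :: "complex \<Rightarrow> 'b" and S1 :: "'b topology"
  assumes S: "open_surface S1" and c: "continuous_map euclidean S1 \<iota>" and inj: "inj \<iota>"
    and i0: "\<iota> 0 = w1" and fi: "\<And>x. Some (FF 0 x) = f1 (\<iota> x)"
    and K: "connectedin S1 K" "w1 \<in> K"
    and phi: "continuous_map (subtopology S1 K) euclidean \<phi>" "\<phi> w1 = 0"
      "\<And>x. x \<in> K \<Longrightarrow> Some (FF e (\<phi> x)) = f1 x"
  shows "K \<subseteq> range \<iota>"
proof -
  have Haus: "Hausdorff_space S1" using S by (simp add: open_surface_def)
  define chi where "chi = psi e \<circ> \<phi>"
  have fchi: "\<And>x. x \<in> K \<Longrightarrow> f1 x = Some (FF 0 (chi x))"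
    using phi(3) by (simp add: chi_def FF_psi[of e])
  have cpsi: "continuous_map euclidean euclidean (psi e)"
    unfolding continuous_map_iff_continuous2 psi_def gfun_def by (intro continuous_intros)
  have cchi: "continuous_map (subtopology S1 K) euclidean chi"
    unfolding chi_def by (rule continuous_map_compose[OF phi(1) cpsi])
  have Kt: "K \<subseteq> topspace S1" using K(1) connectedin_subset_topspace by blast
  define X where "X = subtopology S1 K"
  have tX: "topspace X = K" using Kt by (simp add: X_def Int_absorb1)
  define A where "A = {x \<in> topspace X. (\<iota> \<circ> chi) x = id x}"
  have clA: "closedin X A" unfolding A_def
  proof (rule closedin_continuous_maps_eq[OF Haus])
    show "continuous_map X S1 (\<iota> \<circ> chi)" unfolding X_def by (rule continuous_map_compose[OF cchi c])
    show "continuous_map X S1 id" unfolding X_def by (intro continuous_map_from_subtopology continuous_map_id)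
  qed
  have opA: "openin X A"
  proof (subst openin_subopen, intro ballI)
    fix x assume xA: "x \<in> A"
    define z where "z = chi x"
    define B where "B = ball z pi"
    have O1: "openin S1 (\<iota> ` B)"
      using open_embedding[OF S c inj] by (simp add: open_map_def B_def)
    have O2: "openin X {y \<in> topspace X. chi y \<in> B}"
      by (rule openin_continuous_map_preimage) (use cchi in \<open>auto simp: X_def B_def\<close>)
    have O3: "openin X (\<iota> ` B \<inter> K)" unfolding X_def by (rule openin_subtopology_Int[OF O1])
    define Oo where "Oo = {y \<in> topspace X. chi y \<in> B} \<inter> (\<iota> ` B \<inter> K)"
    have oO: "openin X Oo" unfolding Oo_def using O2 O3 by (rule openin_Int)
    have xO: "x \<in> Oo"
    proof -
      have "x \<in> K" "\<iota> (chi x) = x" using xA tX by (auto simp: A_def)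
      moreover have "chi x \<in> B" by (simp add: B_def z_def pi_gt_zero)
      ultimately show ?thesis using tX unfolding Oo_def by (metis (mono_tags, lifting) IntI image_eqI mem_Collect_eq)
    qed
    have OA: "Oo \<subseteq> A"
    proof
      fix y assume "y \<in> Oo"
      then obtain b where b: "b \<in> B" "y = \<iota> b" and yK: "y \<in> K" and cy: "chi y \<in> B"
        using tX by (auto simp: Oo_def)
      have "Some (FF 0 b) = Some (FF 0 (chi y))" using fi[of b] fchi[OF yK] b by simp
      then have "exp b = exp (chi y)" by (simp add: FF_zero_eq)
      then have "b = chi y" using inj_on_exp_pi[of z] b cy by (auto simp: B_def inj_on_def)
      then show "y \<in> A" using b yK tX by (simp add: A_def)
    qed
    show "\<exists>T. openin X T \<and> x \<in> T \<and> T \<subseteq> A" using oO xO OA by blast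
  qed
  have w1A: "w1 \<in> A" using K(2) tX i0 phi(2) by (simp add: A_def chi_def)
  have "connected_space X" using K(1) by (simp add: X_def connectedin_def)
  then have "A = {} \<or> A = topspace X" using opA clA connected_space_clopen_in by blast
  then have AK: "A = K" using w1A tX by auto
  show ?thesis
  proof
    fix x assume "x \<in> K"
    then have "x \<in> A" using \<open>A = K\<close> by simp
    then have "\<iota> (chi x) = x" by (simp add: A_def)
    then show "x \<in> range \<iota>" by (metis rangeI)
  qed
qed


lemma small_chart:
  assumes S: "open_surface S1" and E: "discrete_subset S1 E" and q: "q \<in> topspace S1"
  obtains T V h k \<delta> where "openin S1 T" "q \<in> T" "open (V::complex set)"
    "homeomorphic_maps (subtopology S1 T) (top_of_set V) h k" "0 < \<delta>" "ball (h q) \<delta> \<subseteq> V"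
    "\<And>u. u \<in> ball (h q) \<delta> \<Longrightarrow> k u \<in> E \<Longrightarrow> u = h q"
proof -
  obtain T V h k where T: "openin S1 T" "q \<in> T" and V: "open (V::complex set)"
    and hm: "homeomorphic_maps (subtopology S1 T) (top_of_set V) h k"
    using chart_at[OF S q] by blast
  note F = hm_facts[OF V hm T(1)]
  obtain O1 where O1: "openin S1 O1" "q \<in> O1" "finite (O1 \<inter> E)"
    using E q unfolding discrete_subset_def by blast
  define Fs where "Fs = O1 \<inter> E - {q}"
  have Ht: "t1_space S1" using S by (simp add: open_surface_def Hausdorff_imp_t1_space)
  have "E \<subseteq> topspace S1" using E by (simp add: discrete_subset_def)
  then have clF: "closedin S1 Fs" using Ht O1(3) unfolding Fs_def t1_space_closedin_finite by auto
  define O2 where "O2 = (O1 \<inter> T) - Fs"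
  have oO2: "openin S1 O2" unfolding O2_def using O1(1) T(1) clF by (intro openin_diff openin_Int)
  have O2T: "O2 \<subseteq> T" by (auto simp: O2_def)
  have qO2: "q \<in> O2" using O1 T by (auto simp: O2_def Fs_def)
  have oh: "open (h ` O2)" by (rule F(7)[OF O2T oO2])
  have "h q \<in> h ` O2" using qO2 by blast
  then obtain \<delta> where d: "0 < \<delta>" "ball (h q) \<delta> \<subseteq> h ` O2" using oh open_contains_ball by blast
  show ?thesis
  proof (rule that[OF T V hm d(1)])
    show "ball (h q) \<delta> \<subseteq> V" using d(2) O2T F(1) by blast
    fix u assume u: "u \<in> ball (h q) \<delta>" "k u \<in> E"
    then obtain y where y: "y \<in> O2" "u = h y" using d(2) by blast
    then have "k u = y" using F(2) O2T by auto
    then have "k u = q" using y u O1 by (auto simp: O2_def Fs_def)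
    then show "u = h q" using F(4) u \<open>ball (h q) \<delta> \<subseteq> V\<close> by (metis subsetD)
  qed
qed

lemma countable_preimage_discrete:
  fixes \<iota> :: "complex \<Rightarrow> 'b"
  assumes c: "continuous_map euclidean S1 \<iota>" and inj: "inj \<iota>" and E: "discrete_subset S1 E"
  shows "countable (\<iota> -` E)"
proof -
  have "(\<iota> -` E) sparse_in UNIV"
    unfolding sparse_in_def
  proof
    fix x :: complex
    have "\<iota> x \<in> topspace S1" using c by (auto simp: continuous_map_def)
    then obtain O1 where O1: "openin S1 O1" "\<iota> x \<in> O1" "finite (O1 \<inter> E)"
      using E unfolding discrete_subset_def by blast
    define B where "B = \<iota> -` O1"
    have "openin euclidean {x \<in> topspace euclidean. \<iota> x \<in> O1}"
      by (rule openin_continuous_map_preimage[OF c O1(1)])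
    then have oB: "open B" by (simp add: B_def vimage_def)
    have finB: "finite (B \<inter> \<iota> -` E)"
    proof -
      have "B \<inter> \<iota> -` E = \<iota> -` (O1 \<inter> E)" by (auto simp: B_def)
      then show ?thesis using finite_vimageI[OF O1(3) inj] by simp
    qed
    show "\<exists>B. x \<in> B \<and> open B \<and> (\<forall>y\<in>B. \<not> y islimpt \<iota> -` E)"
    proof (intro exI[of _ B] conjI ballI notI)
      show "x \<in> B" using O1 by (simp add: B_def)
      show "open B" by (rule oB)
      fix y assume yB: "y \<in> B" and lim: "y islimpt \<iota> -` E"
      define C where "C = B - ((B \<inter> \<iota> -` E) - {y})"
      have "open C" unfolding C_def using oB finB by (intro open_Diff finite_imp_closed) auto
      moreover have "y \<in> C" using yB by (simp add: C_def)
      ultimately obtain x' where "x' \<in> \<iota> -` E" "x' \<in> C" "x' \<noteq> y" using lim unfolding islimpt_def by blast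
      then show False by (auto simp: C_def)
    qed
  qed
  from sparse_imp_countable[OF open_UNIV this] show ?thesis by simp
qed

lemma closure_point_notin_E:
  fixes \<iota> :: "complex \<Rightarrow> 'b" and S1 :: "'b topology"
  assumes S: "open_surface S1" and c: "continuous_map euclidean S1 \<iota>" and inj: "inj \<iota>"
    and E: "discrete_subset S1 E" and wE: "\<iota> 0 \<notin> E"
    and lift: "\<And>K. compactin S1 K \<Longrightarrow> connectedin S1 K \<Longrightarrow> K \<subseteq> topspace S1 - E \<Longrightarrow> \<iota> 0 \<in> K \<Longrightarrow> K \<subseteq> range \<iota>"
    and q: "q \<in> S1 closure_of (range \<iota>)" "q \<notin> E"
  shows "q \<in> range \<iota>"
proof -
  have qt: "q \<in> topspace S1" using q(1) by (simp add: in_closure_of)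
  obtain T V h k \<delta> where T: "openin S1 T" "q \<in> T" and V: "open (V::complex set)"
    and hm: "homeomorphic_maps (subtopology S1 T) (top_of_set V) h k" and d: "0 < \<delta>" "ball (h q) \<delta> \<subseteq> V"
    and dE: "\<And>u. u \<in> ball (h q) \<delta> \<Longrightarrow> k u \<in> E \<Longrightarrow> u = h q"
    using small_chart[OF S E qt] by blast
  note F = hm_facts[OF V hm T(1)]
  define P where "P = k ` ball (h q) \<delta>"
  have Pop: "openin S1 P" unfolding P_def by (rule F(6)[OF d(2) open_ball])
  have kq: "k (h q) = q" using F(2) T(2) by simp
  have qP: "q \<in> P" unfolding P_def using d(1) kq by (metis centre_in_ball imageI)
  have PE: "P \<inter> E = {}"
  proof (rule ccontr)
    assume "P \<inter> E \<noteq> {}"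
    then obtain u where u: "u \<in> ball (h q) \<delta>" "k u \<in> E" by (auto simp: P_def)
    then have "u = h q" using dE by blast
    then show False using u kq q(2) by simp
  qed
  obtain y where y: "y \<in> range \<iota>" "y \<in> P" using q(1) Pop qP unfolding in_closure_of by blast
  from y(1) obtain z where z: "y = \<iota> z" by blast
  from y(2) obtain u where u: "u \<in> ball (h q) \<delta>" "y = k u" by (auto simp: P_def)
  define D where "D = \<iota> -` E"
  have "countable D" unfolding D_def by (rule countable_preimage_discrete[OF c inj E])
  then have pc: "path_connected (- D)" by (intro path_connected_complement_countable) auto
  have z0: "0 \<in> - D" using wE by (simp add: D_def)
  have zz: "z \<in> - D" using PE y z by (auto simp: D_def)
  obtain g where g: "path g" "path_image g \<subseteq> - D" "pathstart g = 0" "pathfinish g = z"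
    using pc z0 zz unfolding path_connected_def by blast
  define K1 where "K1 = \<iota> ` path_image g"
  define K2 where "K2 = k ` closed_segment u (h q)"
  have seg: "closed_segment u (h q) \<subseteq> ball (h q) \<delta>"
    using u d(1) by (intro closed_segment_subset) auto
  have segV: "closed_segment u (h q) \<subseteq> V" using seg d(2) by blast
  have cK1: "compactin S1 K1" unfolding K1_def
    by (rule image_compactin[OF _ c]) (simp add: compactin_euclidean_iff compact_path_image g(1))
  have cK2: "compactin S1 K2" unfolding K2_def
    by (rule image_compactin[OF _ F(5)]) (simp add: compactin_subtopology compactin_euclidean_iff segV)
  have coK1: "connectedin S1 K1" unfolding K1_def
    by (rule connectedin_continuous_map_image[OF c]) (simp add: connectedin_iff_connected connected_path_image g(1))
  have coK2: "connectedin S1 K2" unfolding K2_def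
    by (rule connectedin_continuous_map_image[OF F(5)]) (simp add: connectedin_subtopology connectedin_iff_connected segV)
  have yK: "y \<in> K1 \<inter> K2"
  proof
    show "y \<in> K1" unfolding K1_def z using g(4) pathfinish_in_path_image[of g] by auto
    show "y \<in> K2" unfolding K2_def u(2) by auto
  qed
  define K where "K = K1 \<union> K2"
  have cK: "compactin S1 K" unfolding K_def by (rule compactin_Un[OF cK1 cK2])
  have coK: "connectedin S1 K" unfolding K_def using yK by (intro connectedin_Un[OF coK1 coK2]) auto
  have K1E: "K1 \<subseteq> topspace S1 - E"
    using g(2) c by (auto simp: K1_def D_def continuous_map_def)
  have K2P: "K2 \<subseteq> P" using seg by (auto simp: K2_def P_def)
  have K2E: "K2 \<subseteq> topspace S1 - E" using K2P PE openin_subset[OF Pop] by blast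
  have w: "\<iota> 0 \<in> K" using g(3) pathstart_in_path_image[of g] by (auto simp: K_def K1_def)
  have "K \<subseteq> range \<iota>" using lift[OF cK coK _ w] K1E K2E by (auto simp: K_def)
  moreover have "q \<in> K" unfolding K_def K2_def proof -
    have "h q \<in> closed_segment u (h q)" by simp
    then have "k (h q) \<in> k ` closed_segment u (h q)" by (rule imageI)
    then show "q \<in> K1 \<union> k ` closed_segment u (h q)" using kq by simp
  qed
  ultimately show ?thesis by blast
qed


lemma closure_point_in_E_False:
  fixes \<iota> :: "complex \<Rightarrow> 'b" and S1 :: "'b topology"
  assumes S: "open_surface S1" and c: "continuous_map euclidean S1 \<iota>" and inj: "inj \<iota>"
    and E: "discrete_subset S1 E" and wE: "\<iota> 0 \<notin> E"
    and lift: "\<And>K. compactin S1 K \<Longrightarrow> connectedin S1 K \<Longrightarrow> K \<subseteq> topspace S1 - E \<Longrightarrow> \<iota> 0 \<in> K \<Longrightarrow> K \<subseteq> range \<iota>"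
    and q: "q \<in> S1 closure_of (range \<iota>)" "q \<notin> range \<iota>"
  shows False
proof -
  define G where "G = range \<iota>"
  have Haus: "Hausdorff_space S1" and conS: "connected_space S1" and ncS: "\<not> compact_space S1"
    using S by (auto simp: open_surface_def)
  have Gt: "G \<subseteq> topspace S1" using c by (auto simp: G_def continuous_map_def)
  have Gop: "openin S1 G" using open_embedding[OF S c inj] by (simp add: G_def open_map_def)
  have clC: "\<And>x. x \<in> S1 closure_of G \<Longrightarrow> x \<notin> E \<Longrightarrow> x \<in> G"
    unfolding G_def by (rule closure_point_notin_E[OF S c inj E wE lift]) auto
  have qt: "q \<in> topspace S1" using q(1) by (simp add: in_closure_of)
  obtain T V h k \<delta> where T: "openin S1 T" "q \<in> T" and V: "open (V::complex set)"
    and hm: "homeomorphic_maps (subtopology S1 T) (top_of_set V) h k" and d: "0 < \<delta>" "ball (h q) \<delta> \<subseteq> V"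
    and dE: "\<And>u. u \<in> ball (h q) \<delta> \<Longrightarrow> k u \<in> E \<Longrightarrow> u = h q"
    using small_chart[OF S E qt] by blast
  note F = hm_facts[OF V hm T(1)]
  define hq where "hq = h q"
  have kq: "k hq = q" using F(2) T(2) by (simp add: hq_def)
  have hqV: "hq \<in> V" using F(1) T(2) by (simp add: hq_def)
  have kinj: "\<And>a b. a \<in> V \<Longrightarrow> b \<in> V \<Longrightarrow> k a = k b \<Longrightarrow> a = b" using F(4) by metis
  define P where "P = k ` ball hq \<delta>"
  define Pp where "Pp = k ` (ball hq \<delta> - {hq})"
  have PPp: "P \<subseteq> Pp \<union> {q}" using kq by (auto simp: P_def Pp_def)
  have qP: "q \<in> P" using kq d(1) by (auto simp: P_def)
  have Pop: "openin S1 P" unfolding P_def using d(2) by (intro F(6)) (auto simp: hq_def)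
  have Ppop: "openin S1 Pp" unfolding Pp_def using d(2) by (intro F(6)) (auto simp: hq_def)
  have Ppt: "Pp \<subseteq> topspace S1" using openin_subset[OF Ppop] .
  have PpE: "Pp \<inter> E = {}"
  proof (rule ccontr)
    assume "Pp \<inter> E \<noteq> {}"
    then obtain y where y: "y \<in> Pp" "y \<in> E" by blast
    then obtain u where u: "u \<in> ball hq \<delta> - {hq}" "y = k u" unfolding Pp_def by blast
    then have "u = hq" using dE[of u] y(2) by (simp add: hq_def)
    then show False using u(1) by simp
  qed
  have PpG: "Pp \<subseteq> G"
  proof -
    have conPp: "connectedin S1 Pp" unfolding Pp_def
      by (rule connectedin_continuous_map_image[OF F(5)])
        (use d(2) in \<open>auto simp: connectedin_subtopology connectedin_iff_connected hq_def intro!: connected_punctured_ball\<close>)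
    define X where "X = subtopology S1 Pp"
    have tX: "topspace X = Pp" using Ppt by (simp add: X_def Int_absorb1)
    have cX: "connected_space X" using conPp by (simp add: X_def connectedin_def)
    have oA: "openin X (G \<inter> Pp)" unfolding X_def by (rule openin_subtopology_Int[OF Gop])
    have eqA: "G \<inter> Pp = (S1 closure_of G) \<inter> Pp"
      using closure_of_subset[OF Gt] clC PpE by blast
    have cA: "closedin X (G \<inter> Pp)" unfolding X_def closedin_subtopology eqA
      by (intro exI[of _ "S1 closure_of G"]) auto
    obtain y where y: "y \<in> G" "y \<in> P" using q(1) Pop qP unfolding in_closure_of G_def by blast
    have "y \<noteq> q" using y q(2) by (auto simp: G_def)
    then have "y \<in> Pp" using y PPp by blast
    then have "G \<inter> Pp \<noteq> {}" using y by blast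
    then have "G \<inter> Pp = topspace X" using cX oA cA connected_space_clopen_in by blast
    then show ?thesis using tX by blast
  qed
  have "homeomorphic_map euclidean (subtopology S1 G) \<iota>" unfolding G_def by (rule embedding_homeo[OF S c inj])
  then obtain j where hmj: "homeomorphic_maps euclidean (subtopology S1 G) \<iota> j"
    using homeomorphic_map_maps by blast
  have tG: "topspace (subtopology S1 G) = G" using Gt by (simp add: Int_absorb1)
  have ji: "\<And>x. j (\<iota> x) = x" using hmj by (simp add: homeomorphic_maps_def)
  have ij: "\<And>y. y \<in> G \<Longrightarrow> \<iota> (j y) = y" using hmj tG by (simp add: homeomorphic_maps_def)
  have cj: "continuous_map (subtopology S1 G) euclidean j" using hmj by (simp add: homeomorphic_maps_def)
  define t where "t = \<delta> / 2"
  have t0: "0 < t" "t < \<delta>" using d(1) by (auto simp: t_def)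
  have sphV: "sphere hq t \<subseteq> ball hq \<delta> - {hq}" using t0 by auto
  have cballV: "cball hq t \<subseteq> ball hq \<delta>" using t0 by auto
  have bV: "ball hq \<delta> \<subseteq> V" using d(2) by (simp add: hq_def)
  have kG: "\<And>s. s \<in> sphere hq t \<Longrightarrow> k s \<in> G"
  proof -
    fix s assume "s \<in> sphere hq t"
    then have "s \<in> ball hq \<delta> - {hq}" using sphV by blast
    then have "k s \<in> Pp" unfolding Pp_def by blast
    then show "k s \<in> G" using PpG by blast
  qed
  define gam where "gam = (j \<circ> k) \<circ> circlepath hq t"
  have pic: "path_image (circlepath hq t) = sphere hq t" using t0 by (simp add: path_image_circlepath_nonneg)
  have ckS: "continuous_map (top_of_set (sphere hq t)) (subtopology S1 G) k"
  proof (rule continuous_map_into_subtopology)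
    have "continuous_map (subtopology (top_of_set V) (sphere hq t)) S1 k"
      by (rule continuous_map_from_subtopology[OF F(5)])
    moreover have "subtopology (top_of_set V) (sphere hq t) = top_of_set (sphere hq t)"
    proof -
      have "V \<inter> sphere hq t = sphere hq t" using sphV bV by blast
      then show ?thesis by (simp add: subtopology_subtopology)
    qed
    ultimately show "continuous_map (top_of_set (sphere hq t)) S1 k" by simp
    show "k \<in> topspace (top_of_set (sphere hq t)) \<rightarrow> G" using kG by auto
  qed
  have cjk: "continuous_on (sphere hq t) (j \<circ> k)"
    using continuous_map_compose[OF ckS cj] by simp
  have injjk: "inj_on (j \<circ> k) (sphere hq t)"
  proof (rule inj_onI)
    fix a b assume ab: "a \<in> sphere hq t" "b \<in> sphere hq t" "(j \<circ> k) a = (j \<circ> k) b"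
    have "k a \<in> G" "k b \<in> G" using ab(1,2) kG by auto
    then have "k a = k b" using ab(3) ij by (metis comp_apply)
    then show "a = b" using kinj ab sphV bV by blast
  qed
  have sp: "simple_path gam" unfolding gam_def
    by (rule simple_path_continuous_image) (use t0 cjk injjk pic simple_path_circlepath[of hq t] in auto)
  have loop: "pathfinish gam = pathstart gam" by (simp add: gam_def pathstart_compose pathfinish_compose)
  have pig: "path_image gam = (j \<circ> k) ` sphere hq t" unfolding gam_def path_image_compose pic ..
  obtain inner outer where J: "inner \<noteq> {}" "open inner" "connected inner"
    "outer \<noteq> {}" "open outer" "connected outer"
    "bounded inner" "\<not> bounded outer" "inner \<inter> outer = {}"
    "inner \<union> outer = - path_image gam"
    "frontier inner = path_image gam" "frontier outer = path_image gam"
    by (rule Jordan_curve[OF sp loop])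
  define Q where "Q = k ` (ball hq t - {hq})"
  have QPp: "Q \<subseteq> Pp" using t0 by (auto simp: Q_def Pp_def)
  have QG: "Q \<subseteq> G" using QPp PpG by blast
  have bt: "ball hq t \<subseteq> V" using cballV bV ball_subset_cball by blast
  have Qop: "openin S1 Q" unfolding Q_def using bt by (intro F(6)) auto
  define D where "D = \<iota> -` Q"
  have "openin euclidean {x \<in> topspace euclidean. \<iota> x \<in> Q}"
    by (rule openin_continuous_map_preimage[OF c Qop])
  then have Dop: "open D" by (simp add: D_def vimage_def)
  have DjQ: "D = j ` Q"
  proof
    show "D \<subseteq> j ` Q"
    proof
      fix x assume "x \<in> D"
      then have "\<iota> x \<in> Q" by (simp add: D_def)
      moreover have "x = j (\<iota> x)" using ji by simp
      ultimately show "x \<in> j ` Q" by blast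
    qed
    show "j ` Q \<subseteq> D"
    proof
      fix x assume "x \<in> j ` Q"
      then obtain y where y: "y \<in> Q" "x = j y" by blast
      then have "\<iota> x = y" using ij QG by blast
      then show "x \<in> D" using y by (simp add: D_def)
    qed
  qed
  have iD: "\<iota> ` D = Q" using QG by (auto simp: D_def G_def)
  have Dcon: "connected D"
  proof -
    have "connectedin S1 Q" unfolding Q_def
      by (rule connectedin_continuous_map_image[OF F(5)])
        (use bt in \<open>auto simp: connectedin_subtopology connectedin_iff_connected intro!: connected_punctured_ball\<close>)
    then have "connectedin (subtopology S1 G) Q" using QG by (simp add: connectedin_subtopology)
    then have "connectedin euclidean (j ` Q)" by (rule connectedin_continuous_map_image[OF cj])
    then show ?thesis by (simp add: DjQ connectedin_iff_connected)
  qed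
  have Dne: "D \<noteq> {}"
  proof -
    have "hq + of_real (t/2) \<in> ball hq t - {hq}" using t0 by (auto simp: dist_norm)
    then have "Q \<noteq> {}" by (auto simp: Q_def)
    then show ?thesis using iD by auto
  qed
  have Dpath: "D \<inter> path_image gam = {}"
  proof (rule ccontr)
    assume "D \<inter> path_image gam \<noteq> {}"
    then obtain x where x0: "x \<in> D" "x \<in> path_image gam" by blast
    then obtain s where x: "s \<in> sphere hq t" "x = j (k s)" unfolding pig by auto
    note x = x0(1) x
    have "\<iota> x \<in> Q" using x(1) by (simp add: D_def)
    then obtain a where a: "a \<in> ball hq t - {hq}" "\<iota> x = k a" unfolding Q_def by blast
    have "k s \<in> G" using x(2) kG by auto
    then have "\<iota> x = k s" using x(3) ij by simp
    moreover have "a \<in> V" "s \<in> V" using a(1) x(2) sphV bV t0 by auto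
    ultimately have "a = s" using a(2) kinj by simp
    then show False using a x(2) by simp
  qed
  have kcb: "compactin S1 (k ` cball hq t)"
    by (rule image_compactin[OF _ F(5)]) (use cballV bV in \<open>auto simp: compactin_subtopology compactin_euclidean_iff\<close>)
  have clQ: "S1 closure_of Q \<subseteq> k ` cball hq t"
    by (rule closure_of_minimal) (use compactin_imp_closedin[OF Haus kcb] in \<open>auto simp: Q_def\<close>)
  have qclQ: "q \<in> S1 closure_of Q"
  proof -
    have "hq islimpt (ball hq t - {hq})" using t0 islimpt_punctured[of hq "ball hq t"] islimpt_ball by auto
    then have "hq \<in> closure (ball hq t - {hq})" by (simp add: closure_def)
    moreover have "V \<inter> (ball hq t - {hq}) = ball hq t - {hq}" using bV t0 by auto
    ultimately have "hq \<in> (top_of_set V) closure_of (ball hq t - {hq})"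
      using hqV by (simp add: closure_of_subtopology euclidean_closure_of)
    then have "k hq \<in> k ` ((top_of_set V) closure_of (ball hq t - {hq}))" by blast
    then show ?thesis using continuous_map_image_closure_subset[OF F(5)] kq by (auto simp: Q_def)
  qed
  show False
  proof (cases "bounded D")
    case True
    have "compact (closure D)" using True by (simp add: compact_eq_bounded_closed bounded_closure)
    then have "compactin S1 (\<iota> ` closure D)"
      by (intro image_compactin[OF _ c]) (simp add: compactin_euclidean_iff)
    then have cl: "closedin S1 (\<iota> ` closure D)" by (rule compactin_imp_closedin[OF Haus])
    have "Q \<subseteq> \<iota> ` closure D" using iD closure_subset by blast
    then have "S1 closure_of Q \<subseteq> \<iota> ` closure D" using cl by (rule closure_of_minimal)
    then show False using qclQ q(2) by blast
  next
    case False
    have "D \<subseteq> inner \<union> outer" using J(10) Dpath by blast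
    moreover have "inner \<inter> outer \<inter> D = {}" using J(9) by blast
    ultimately have "inner \<inter> D = {} \<or> outer \<inter> D = {}"
      using connectedD[OF Dcon J(2) J(5)] by blast
    moreover have "\<not> D \<subseteq> inner" using False J(7) bounded_subset by blast
    ultimately have Dout: "D \<subseteq> outer" using \<open>D \<subseteq> inner \<union> outer\<close> Dne by blast
    have "outer \<inter> closure D \<subseteq> D"
    proof
      fix x assume x: "x \<in> outer \<inter> closure D"
      have "\<iota> ` (euclidean closure_of D) \<subseteq> S1 closure_of (\<iota> ` D)"
        by (rule continuous_map_image_closure_subset[OF c])
      then have "\<iota> x \<in> S1 closure_of Q" using x iD by (auto simp: euclidean_closure_of)
      then obtain s where s: "s \<in> cball hq t" "\<iota> x = k s" using clQ by blast
      have "s \<noteq> hq"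
      proof
        assume "s = hq"
        then have "\<iota> x = q" using s(2) kq by simp
        then show False using q(2) by (metis rangeI)
      qed
      moreover have "s \<notin> sphere hq t"
      proof
        assume "s \<in> sphere hq t"
        then have "(j \<circ> k) s \<in> path_image gam" unfolding pig by (rule imageI)
        moreover have "(j \<circ> k) s = x" using s(2) ji by (metis comp_apply)
        ultimately have "x \<in> path_image gam" by simp
        then show False using x J(10) by blast
      qed
      ultimately have "s \<in> ball hq t - {hq}" using s(1) by auto
      then show "x \<in> D" using s(2) by (auto simp: D_def Q_def)
    qed
    then have "closedin (top_of_set outer) D" unfolding closedin_closed
      using Dout closure_subset by (intro exI[of _ "closure D"]) auto
    moreover have "openin (top_of_set outer) D" using Dop Dout by (simp add: openin_open_eq[OF J(5)])
    ultimately have "D = {} \<or> D = outer" using J(6) connected_clopen by blast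
    then have Deq: "D = outer" using Dne by blast
    define K3 where "K3 = \<iota> ` (closure inner \<union> path_image gam) \<union> k ` cball hq t"
    have cK3: "compactin S1 K3"
    proof -
      have "compact (closure inner)" using J(7) by (simp add: compact_eq_bounded_closed bounded_closure)
      moreover have "compact (path_image gam)" using sp by (intro compact_path_image simple_path_imp_path)
      ultimately have "compact (closure inner \<union> path_image gam)" by (rule compact_Un)
      then have "compactin S1 (\<iota> ` (closure inner \<union> path_image gam))"
        by (intro image_compactin[OF _ c]) (simp add: compactin_euclidean_iff)
      then show ?thesis unfolding K3_def by (rule compactin_Un[OF _ kcb])
    qed
    have GK3: "G \<union> {q} = K3"
    proof
      show "G \<union> {q} \<subseteq> K3"
      proof
        fix y assume "y \<in> G \<union> {q}"
        then consider "y = q" | x where "y = \<iota> x" by (auto simp: G_def)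
        then show "y \<in> K3"
        proof cases
          case 1 then show ?thesis using kq t0 by (auto simp: K3_def)
        next
          case (2 x)
          show ?thesis
          proof (cases "x \<in> outer")
            case True
            then have "\<iota> x \<in> Q" using Deq by (auto simp: D_def)
            then show ?thesis using 2 by (auto simp: K3_def Q_def)
          next
            case False
            then have "x \<in> inner \<or> x \<in> path_image gam" using J(10) by blast
            then show ?thesis using 2 closure_subset by (auto simp: K3_def)
          qed
        qed
      qed
      show "K3 \<subseteq> G \<union> {q}"
      proof
        fix y assume "y \<in> K3"
        then consider x where "y = \<iota> x" | s where "s \<in> cball hq t" "y = k s" by (auto simp: K3_def)
        then show "y \<in> G \<union> {q}"
        proof cases
          case 1 then show ?thesis by (auto simp: G_def)
        next
          case (2 s)
          then have "y \<in> P" using cballV by (auto simp: P_def)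
          then show ?thesis using PPp PpG by blast
        qed
      qed
    qed
    have "closedin S1 (G \<union> {q})" unfolding GK3 by (rule compactin_imp_closedin[OF Haus cK3])
    moreover have "openin S1 (G \<union> {q})"
    proof -
      have "G \<union> {q} = G \<union> P" using PPp PpG qP by blast
      then show ?thesis using openin_Un[OF Gop Pop] by simp
    qed
    ultimately have "G \<union> {q} = {} \<or> G \<union> {q} = topspace S1"
      using conS connected_space_clopen_in by blast
    then have "topspace S1 = K3" using GK3 by auto
    then have "compact_space S1" using cK3 by (simp add: compact_space_def)
    then show False using ncS by simp
  qed
qed

lemma maximal:
  fixes S1 :: "'b topology"
  assumes es: "\<And>n. 0 \<le> es n" "\<And>n. es n \<le> 1/30"
    and kc: "kernel_cond (\<lambda>n. euclidean) (\<lambda>n. Some \<circ> FF (es n)) (\<lambda>n. 0) S1 f1 w1"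
    and ps: "psub (euclidean::complex topology) (Some \<circ> FF 0) 0 S1 f1 w1"
  shows "pequiv euclidean (Some \<circ> FF 0) 0 S1 f1 w1"
proof -
  obtain \<iota> where c: "continuous_map euclidean S1 \<iota>" and inj0: "inj_on \<iota> (topspace euclidean)"
    and i0: "\<iota> 0 = w1" and fi0: "\<forall>x\<in>topspace euclidean. (Some \<circ> FF 0) x = f1 (\<iota> x)"
    using ps unfolding psub_def by blast
  have inj: "inj \<iota>" using inj0 by simp
  have fi: "\<And>x. Some (FF 0 x) = f1 (\<iota> x)" using fi0 by simp
  have ps1: "pointed_surface S1 f1 w1" using kc by (simp add: kernel_cond_def)
  then have S: "open_surface S1" by (simp add: pointed_surface_def spread_surface_def)
  obtain E where E: "discrete_subset S1 E" "w1 \<notin> E"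
    and L: "\<And>K. compactin S1 K \<and> K \<subseteq> topspace S1 - E \<and> w1 \<in> K \<Longrightarrow>
           (\<exists>N. \<forall>n>N. \<exists>\<phi>. continuous_map (subtopology S1 K) euclidean \<phi> \<and> inj_on \<phi> K \<and>
                \<phi> w1 = 0 \<and> (\<forall>x\<in>K. (Some \<circ> FF (es n)) (\<phi> x) = f1 x))"
    using kc unfolding kernel_cond_def by blast
  have wE: "\<iota> 0 \<notin> E" using E(2) i0 by simp
  have lift: "K \<subseteq> range \<iota>" if K: "compactin S1 K" "connectedin S1 K" "K \<subseteq> topspace S1 - E" "\<iota> 0 \<in> K" for K
  proof -
    obtain N where N: "\<forall>n>N. \<exists>\<phi>. continuous_map (subtopology S1 K) euclidean \<phi> \<and> inj_on \<phi> K \<and>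
                \<phi> w1 = 0 \<and> (\<forall>x\<in>K. (Some \<circ> FF (es n)) (\<phi> x) = f1 x)"
      using L[of K] K i0 by auto
    then obtain \<phi> where phi: "continuous_map (subtopology S1 K) euclidean \<phi>" "\<phi> w1 = 0"
      "\<forall>x\<in>K. (Some \<circ> FF (es (Suc N))) (\<phi> x) = f1 x"
      by (meson lessI)
    show ?thesis
      by (rule lift_in_image[OF S c inj i0 fi K(2) _ phi(1,2)]) (use K(4) i0 phi(3) in auto)
  qed
  define G where "G = range \<iota>"
  have Gt: "G \<subseteq> topspace S1" using c by (auto simp: G_def continuous_map_def)
  have clG: "S1 closure_of G \<subseteq> G"
  proof
    fix q assume q: "q \<in> S1 closure_of G"
    show "q \<in> G"
    proof (cases "q \<in> E")
      case False
      then show ?thesis using closure_point_notin_E[OF S c inj E(1) wE lift] q by (simp add: G_def)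
    next
      case True
      show ?thesis
      proof (rule ccontr)
        assume "q \<notin> G"
        then show False using closure_point_in_E_False[OF S c inj E(1) wE lift] q by (simp add: G_def)
      qed
    qed
  qed
  have Gcl: "closedin S1 G" using Gt clG closure_of_subset_eq by blast
  have Gop: "openin S1 G" using open_embedding[OF S c inj] by (simp add: G_def open_map_def)
  have conS: "connected_space S1" using S by (simp add: open_surface_def)
  have "G \<noteq> {}" by (simp add: G_def)
  then have GT: "G = topspace S1" using conS Gop Gcl connected_space_clopen_in by blast
  have "homeomorphic_map euclidean S1 \<iota>"
  proof (rule bijective_open_imp_homeomorphic_map[OF c open_embedding[OF S c inj]])
    show "\<iota> ` topspace euclidean = topspace S1" using GT by (simp add: G_def)
    show "inj_on \<iota> (topspace euclidean)" using inj by simp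
  qed
  then show ?thesis unfolding pequiv_def using i0 fi by (intro exI[of _ \<iota>]) auto
qed

theorem theorem5p1:
  shows "\<exists>(F :: nat \<Rightarrow> complex \<Rightarrow> complex) (f :: complex \<Rightarrow> complex).
     (\<forall>n. normalized_entire_triple (F n) \<and> entire_order (F n) = \<infinity>) \<and>
     normalized_entire_triple f \<and> entire_order f = 1 \<and>
     caratheodory_converges (\<lambda>n. euclidean :: complex topology) (\<lambda>n. Some \<circ> F n) (\<lambda>n. 0)
        (euclidean :: complex topology) (Some \<circ> f) 0"
proof (intro exI[of _ "\<lambda>n. FF (eps n)"] exI[of _ "FF 0"] conjI allI)
  fix n
  show "normalized_entire_triple (FF (eps n))" using eps_bounds by (intro FF_normalized) auto
  have "0 < eps n" by (simp add: eps_def)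
  then show "entire_order (FF (eps n)) = \<infinity>" by (rule order_FF_pos)
next
  show "normalized_entire_triple (FF 0)" by (intro FF_normalized) auto
  show "entire_order (FF 0) = 1" by (rule order_FF0)
  show "caratheodory_converges (\<lambda>n. euclidean :: complex topology) (\<lambda>n. Some \<circ> FF (eps n)) (\<lambda>n. 0)
        (euclidean :: complex topology) (Some \<circ> FF 0) 0"
    unfolding caratheodory_converges_def
  proof (intro conjI allI impI)
    show "standing_assumption (\<lambda>n. euclidean :: complex topology) (\<lambda>n. Some \<circ> FF (eps n)) (\<lambda>n. 0)"
      by (rule standing_FF)
    fix r :: "nat \<Rightarrow> nat" assume r: "strict_mono r"
    have eqs: "(\<lambda>n. euclidean :: complex topology) \<circ> r = (\<lambda>n. euclidean)"
      "(\<lambda>n. Some \<circ> FF (eps n)) \<circ> r = (\<lambda>n. Some \<circ> FF (eps (r n)))"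
      "(\<lambda>n. 0::complex) \<circ> r = (\<lambda>n. 0)" by (auto simp: fun_eq_iff)
    have es1: "\<And>n. 0 \<le> eps (r n)" "\<And>n. eps (r n) \<le> 1/30" using eps_bounds by auto
    have es2: "\<And>n. eps (r n) \<le> 1 / (real n + 30)"
    proof -
      fix n have "n \<le> r n" using seq_suble[OF r] by simp
      then show "eps (r n) \<le> 1 / (real n + 30)" by (simp add: eps_def frac_le)
    qed
    show "is_kernel ((\<lambda>n. euclidean :: complex topology) \<circ> r) ((\<lambda>n. Some \<circ> FF (eps n)) \<circ> r) ((\<lambda>n. 0) \<circ> r)
        (euclidean :: complex topology) (Some \<circ> FF 0) 0"
      unfolding eqs is_kernel_def
    proof (intro conjI allI impI)
      show "kernel_cond (\<lambda>n. euclidean) (\<lambda>n. Some \<circ> FF (eps (r n))) (\<lambda>n. 0) (euclidean :: complex topology) (Some \<circ> FF 0) 0"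
        by (rule kernel_cond_FF0) (use es1 es2 in auto)
      fix S1 :: "complex topology" and f1 w1
      assume "kernel_cond (\<lambda>n. euclidean) (\<lambda>n. Some \<circ> FF (eps (r n))) (\<lambda>n. 0) S1 f1 w1 \<and>
         psub euclidean (Some \<circ> FF 0) 0 S1 f1 w1"
      then have kc: "kernel_cond (\<lambda>n. euclidean) (\<lambda>n. Some \<circ> FF (eps (r n))) (\<lambda>n. 0) S1 f1 w1"
        and ps: "psub euclidean (Some \<circ> FF 0) 0 S1 f1 w1" by auto
      show "pequiv euclidean (Some \<circ> FF 0) 0 S1 f1 w1"
        by (rule maximal[OF es1 kc ps])
    qed
  qed
qed

end
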